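(* Let $M=L+S\in\mathbb{R}^{n_1\times n_2}$ where $L$ has rank $r$ and $S$ has support $\Omega$. Let $G\in\mathbb{R}^{n_1\times r_G}$ be a basis matrix such that $L_{\mathrm{new}}:=(I-GG^\top)L$ has rank $r_{\mathrm{new}}<r$, with reduced SVD $L_{\mathrm{new}}=U_{\mathrm{new}}\Sigma_{\mathrm{new}}V_{\mathrm{new}}^\top$. Let $$\Pi=\{[G\ U_{\mathrm{new}}]Y_1^\top+Y_2V_{\mathrm{new}}^\top:\ Y_1\in\mathbb{R}^{n_2\times(r_G+r_{\mathrm{new}})},\ Y_2\in\mathbb{R}^{n_1\times r_{\mathrm{new}}}\}.$$ If $\|\mathcal P_\Omega\mathcal P_\Pi\|\le 1/4$, $\lambda<3/10$, and there is a pair $(W,F)$ of $n_1\times n_2$ matrices (and a matrix $D$) obeying $$U_{\mathrm{new}}V_{\mathrm{new}}^\top+W=\lambda(\mathrm{sgn}(S)+F+\mathcal P_\Omega D)$$ with $\mathcal P_\Pi W=0$, $\|W\|\le 9/10$, $\mathcal P_\Omega F=0$, $\|F\|_\infty\le 9/10$ and $\|\mathcal P_\Omega D\|_F\le 1/4$, then $(L_{\mathrm{new}},S,L^\top G)$ is the unique solution of $$\min_{\tilde L_{\mathrm{new}},\tilde S,\tilde X}\|\tilde L_{\mathrm{new}}\|_*+\lambda\|\tilde S\|_1\ \text{ s.t. }\ \tilde L_{\mathrm{new}}+G\tilde X^\top+\tilde S=M.$$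
   Context: A basis matrix satisfies $G^\top G=I$; $[A\ B]$ is horizontal concatenation. $\mathcal P_\Pi$ is the orthogonal projection (w.r.t. the trace inner product) onto the linear space $\Pi$ of matrices; $\mathcal P_\Omega$ sets to zero all entries with index outside $\Omega$. $\|\mathcal A\|=\sup_{\|X\|_F=1}\|\mathcal A X\|_F$ for a linear operator $\mathcal A$. $\|W\|$ is the spectral norm, $\|F\|_\infty=\max|F_{ij}|$, $\|\cdot\|_F$ Frobenius norm, $\|\cdot\|_*$ nuclear norm, $\|X\|_1=\sum|X_{ij}|$; $\mathrm{sgn}$ is entrywise sign. The variables range over $\tilde L_{\mathrm{new}},\tilde S\in\mathbb{R}^{n_1\times n_2}$, $\tilde X\in\mathbb{R}^{n_2\times r_G}$. *)

theory Defs
  imports "Jordan_Normal_Form.DL_Rank" "Jordan_Normal_Form.Char_Poly" "HOL-Computational_Algebra.Polynomial"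
begin

definition mrank :: "real mat \<Rightarrow> nat" where
  "mrank A = vec_space.rank (dim_row A) A"

definition frob_inner :: "real mat \<Rightarrow> real mat \<Rightarrow> real" where
  "frob_inner A B = (\<Sum>i<dim_row A. \<Sum>j<dim_col A. A $$ (i,j) * B $$ (i,j))"

definition frob_norm :: "real mat \<Rightarrow> real" where
  "frob_norm A = sqrt (frob_inner A A)"

definition l1_norm :: "real mat \<Rightarrow> real" where
  "l1_norm A = (\<Sum>i<dim_row A. \<Sum>j<dim_col A. \<bar>A $$ (i,j)\<bar>)"

definition max_norm :: "real mat \<Rightarrow> real" where
  "max_norm A = Max ({\<bar>A $$ (i,j)\<bar> | i j. i < dim_row A \<and> j < dim_col A} \<union> {0})"

definition vnorm :: "real vec \<Rightarrow> real" where
  "vnorm v = sqrt (v \<bullet> v)"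

definition spec_norm :: "real mat \<Rightarrow> real" where
  "spec_norm A = Sup {vnorm (A *\<^sub>v v) | v. v \<in> carrier_vec (dim_col A) \<and> vnorm v = 1}"

(* nuclear norm: sum of singular values, i.e. of the square roots of the
   eigenvalues (with multiplicity) of A^T A *)
definition nuc_norm :: "real mat \<Rightarrow> real" where
  "nuc_norm A = sum_mset (image_mset sqrt (proots (char_poly (transpose_mat A * A))))"

definition sgn_mat :: "real mat \<Rightarrow> real mat" where
  "sgn_mat A = map_mat sgn A"

definition supp :: "real mat \<Rightarrow> (nat \<times> nat) set" where
  "supp A = {(i,j). i < dim_row A \<and> j < dim_col A \<and> A $$ (i,j) \<noteq> 0}"

definition P_Omega :: "(nat \<times> nat) set \<Rightarrow> real mat \<Rightarrow> real mat" where
  "P_Omega \<Omega> X = mat (dim_row X) (dim_col X) (\<lambda>(i,j). if (i,j) \<in> \<Omega> then X $$ (i,j) else 0)"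

definition proj_onto :: "real mat set \<Rightarrow> real mat \<Rightarrow> real mat" where
  "proj_onto PiS X = (THE Y. Y \<in> PiS \<and> (\<forall>Z\<in>PiS. frob_inner (X - Y) Z = 0))"

definition op_norm :: "nat \<Rightarrow> nat \<Rightarrow> (real mat \<Rightarrow> real mat) \<Rightarrow> real" where
  "op_norm n1 n2 T = Sup {frob_norm (T X) | X. X \<in> carrier_mat n1 n2 \<and> frob_norm X = 1}"

definition hcat :: "real mat \<Rightarrow> real mat \<Rightarrow> real mat" where
  "hcat A B = four_block_mat A B (0\<^sub>m 0 (dim_col A)) (0\<^sub>m 0 (dim_col B))"

definition basis_mat :: "real mat \<Rightarrow> bool" where
  "basis_mat G \<longleftrightarrow> transpose_mat G * G = 1\<^sub>m (dim_col G)"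

end

theory Submission
  imports Defs "HOL-Computational_Algebra.Fundamental_Theorem_Algebra"
begin

lemma cs_sum_sq:
  fixes f g :: "'a \<Rightarrow> real" assumes fin: "finite A"
  shows "(\<Sum>i\<in>A. f i * g i)^2 \<le> (\<Sum>i\<in>A. (f i)^2) * (\<Sum>i\<in>A. (g i)^2)"
proof -
  define a where "a = (\<Sum>i\<in>A. (f i)^2)"
  define b where "b = (\<Sum>i\<in>A. (g i)^2)"
  define c where "c = (\<Sum>i\<in>A. f i * g i)"
  have b0: "b \<ge> 0" unfolding b_def by (simp add: sum_nonneg)
  have "0 \<le> (\<Sum>i\<in>A. (b * f i - c * g i)^2)" by (simp add: sum_nonneg)
  also have "\<dots> = (\<Sum>i\<in>A. b*b*(f i)^2 - 2*b*c*(f i * g i) + c*c*(g i)^2)"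
    by (rule sum.cong, auto simp: power2_eq_square algebra_simps)
  also have "\<dots> = b*b*a - 2*b*c*c + c*c*b"
    unfolding a_def b_def c_def by (simp add: sum.distrib sum_subtractf sum_distrib_left)
  finally have 1: "0 \<le> b * (a*b - c*c)" by (simp add: algebra_simps)
  show ?thesis
  proof (cases "b = 0")
    case True
    hence "\<forall>i\<in>A. (g i)^2 = 0" using fin unfolding b_def by (subst (asm) sum_nonneg_eq_0_iff) auto
    hence "c = 0" unfolding c_def by auto
    thus ?thesis using True unfolding a_def b_def c_def by simp
  next
    case False
    with b0 have "b > 0" by auto
    with 1 have "c*c \<le> a*b" by (simp add: zero_le_mult_iff)
    thus ?thesis unfolding a_def b_def c_def by (simp add: power2_eq_square)
  qed
qed

lemma cs_sum:
  fixes f g :: "'a \<Rightarrow> real" assumes fin: "finite A"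
  shows "(\<Sum>i\<in>A. f i * g i) \<le> sqrt (\<Sum>i\<in>A. (f i)^2) * sqrt (\<Sum>i\<in>A. (g i)^2)"
proof -
  have "(\<Sum>i\<in>A. f i * g i) \<le> sqrt ((\<Sum>i\<in>A. f i * g i)^2)" by simp
  also have "\<dots> \<le> sqrt ((\<Sum>i\<in>A. (f i)^2) * (\<Sum>i\<in>A. (g i)^2))"
    by (rule real_sqrt_le_mono[OF cs_sum_sq[OF fin]])
  finally show ?thesis by (simp add: real_sqrt_mult)
qed

lemma sym_real_eigvec:
  fixes M :: "real mat"
  assumes M: "M \<in> carrier_mat n n" and sym: "transpose_mat M = M" and n: "n > 0"
  shows "\<exists>l v. v \<in> carrier_vec n \<and> v \<noteq> 0\<^sub>v n \<and> M *\<^sub>v v = l \<cdot>\<^sub>v v"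
proof -
  define Mc where "Mc = map_mat complex_of_real M"
  have Mc: "Mc \<in> carrier_mat n n" using M unfolding Mc_def by auto
  have deg: "degree (char_poly Mc) = n" using degree_monic_char_poly[OF Mc] by auto
  have "\<not> constant (poly (char_poly Mc))" using deg n by (simp add: constant_degree)
  from fundamental_theorem_of_algebra[OF this] obtain z where "poly (char_poly Mc) z = 0" by blast
  hence "eigenvalue Mc z" using eigenvalue_root_char_poly[OF Mc] by auto
  then obtain w where ev: "eigenvector Mc w z" unfolding eigenvalue_def by blast
  hence w: "w \<in> carrier_vec n" "w \<noteq> 0\<^sub>v n" and Mw: "Mc *\<^sub>v w = z \<cdot>\<^sub>v w"
    unfolding eigenvector_def using Mc by auto
  have Mwi: "(\<Sum>j<n. complex_of_real (M $$ (i,j)) * w $ j) = z * w $ i" if "i < n" for i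
  proof -
    have "(Mc *\<^sub>v w) $ i = z * w $ i" using Mw that w by simp
    thus ?thesis using that w M unfolding Mc_def
      by (simp add: mult_mat_vec_def scalar_prod_def atLeast0LessThan)
  qed
  define s where "s = (\<Sum>i<n. \<Sum>j<n. complex_of_real (M $$ (i,j)) * w $ j * cnj (w $ i))"
  define N where "N = (\<Sum>i<n. w $ i * cnj (w $ i))"
  have "s = (\<Sum>i<n. (\<Sum>j<n. complex_of_real (M $$ (i,j)) * w $ j) * cnj (w $ i))"
    unfolding s_def by (simp add: sum_distrib_right)
  also have "\<dots> = (\<Sum>i<n. z * w$i * cnj (w$i))" by (intro sum.cong refl) (simp add: Mwi)
  also have "\<dots> = z * N" unfolding N_def by (simp add: sum_distrib_left mult.assoc)
  finally have s1: "s = z * N" .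
  have Msym: "M $$ (i,j) = M $$ (j,i)" if "i<n" "j<n" for i j
    using sym that M by (metis carrier_matD index_transpose_mat(1))
  have "cnj s = (\<Sum>i<n. \<Sum>j<n. complex_of_real (M $$ (i,j)) * cnj (w $ j) * w $ i)"
    unfolding s_def by simp
  also have "\<dots> = (\<Sum>j<n. \<Sum>i<n. complex_of_real (M $$ (i,j)) * cnj (w $ j) * w $ i)"
    by (rule sum.swap)
  also have "\<dots> = s" unfolding s_def
    by (intro sum.cong refl, simp add: Msym mult.commute mult.left_commute)
  finally have s2: "cnj s = s" .
  have Nreal: "N = complex_of_real (\<Sum>i<n. (cmod (w $ i))^2)"
    unfolding N_def of_real_sum by (intro sum.cong refl) (simp add: complex_norm_square[symmetric])
  have "\<exists>i<n. w $ i \<noteq> 0" using w by (metis eq_vecI index_zero_vec(1,2) carrier_vecD)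
  then obtain i0 where i0: "i0 < n" "w $ i0 \<noteq> 0" by blast
  have Npos: "(\<Sum>i<n. (cmod (w $ i))^2) > 0"
    by (rule sum_pos2[of _ i0]) (use i0 in auto)
  have zreal: "Im z = 0"
  proof -
    from s1 s2 have "cnj z * cnj N = z * N" by simp
    hence "cnj z * N = z * N" using Nreal by simp
    moreover have "N \<noteq> 0" using Npos Nreal by (metis less_irrefl of_real_eq_0_iff)
    ultimately have "cnj z = z" by (metis mult_cancel_right)
    hence "Im (cnj z) = Im z" by simp
    thus ?thesis by simp
  qed
  have Re_eq: "(\<Sum>j<n. M $$ (i,j) * Re (w $ j)) = Re z * Re (w $ i)" if "i<n" for i
  proof -
    have "Re (\<Sum>j<n. complex_of_real (M $$ (i,j)) * w $ j) = Re (z * w $ i)" using Mwi[OF that] by simp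
    thus ?thesis using zreal by (simp add: Re_sum)
  qed
  have Im_eq: "(\<Sum>j<n. M $$ (i,j) * Im (w $ j)) = Re z * Im (w $ i)" if "i<n" for i
  proof -
    have "Im (\<Sum>j<n. complex_of_real (M $$ (i,j)) * w $ j) = Im (z * w $ i)" using Mwi[OF that] by simp
    thus ?thesis using zreal by (simp add: Im_sum)
  qed
  define a where "a = vec n (\<lambda>i. Re (w $ i))"
  define b where "b = vec n (\<lambda>i. Im (w $ i))"
  have Ma: "M *\<^sub>v a = Re z \<cdot>\<^sub>v a"
    by (rule eq_vecI) (use M Re_eq in \<open>auto simp: a_def mult_mat_vec_def scalar_prod_def atLeast0LessThan\<close>)
  have Mb: "M *\<^sub>v b = Re z \<cdot>\<^sub>v b"
    by (rule eq_vecI) (use M Im_eq in \<open>auto simp: b_def mult_mat_vec_def scalar_prod_def atLeast0LessThan\<close>)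
  have "a \<noteq> 0\<^sub>v n \<or> b \<noteq> 0\<^sub>v n"
  proof (rule ccontr)
    assume "\<not> ?thesis"
    hence "a $ i0 = 0" "b $ i0 = 0" using i0 by auto
    hence "Re (w $ i0) = 0" "Im (w $ i0) = 0" using i0 unfolding a_def b_def by auto
    thus False using i0 complex_eqI by auto
  qed
  moreover have "a \<in> carrier_vec n" "b \<in> carrier_vec n" unfolding a_def b_def by auto
  ultimately show ?thesis using Ma Mb by blast
qed

definition onl :: "nat \<Rightarrow> real vec list \<Rightarrow> bool" where
  "onl n xs \<longleftrightarrow> set xs \<subseteq> carrier_vec n \<and>
     (\<forall>i<length xs. \<forall>j<length xs. xs!i \<bullet> xs!j = (if i = j then 1 else 0))"

lemma sprod_self_eq: "(v::real vec) \<bullet> v = (\<Sum>i<dim_vec v. (v$i)^2)"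
  by (simp add: scalar_prod_def atLeast0LessThan power2_eq_square)

lemma sprod_self_ge0: "(v::real vec) \<bullet> v \<ge> 0"
  unfolding sprod_self_eq by (simp add: sum_nonneg)

lemma sprod_self_pos: assumes "v \<in> carrier_vec n" "v \<noteq> 0\<^sub>v n" shows "(v::real vec) \<bullet> v > 0"
proof -
  have "\<exists>i<n. v $ i \<noteq> 0" using assms by (metis eq_vecI index_zero_vec(1,2) carrier_vecD)
  then obtain i0 where i0: "i0 < n" "v $ i0 \<noteq> 0" by blast
  show ?thesis unfolding sprod_self_eq
    by (rule sum_pos2[of _ i0]) (use i0 assms in auto)
qed

lemma sprod_self_0: assumes "v \<in> carrier_vec n" "(v::real vec) \<bullet> v = 0" shows "v = 0\<^sub>v n"
  using sprod_self_pos[OF assms(1)] assms(2) by fastforce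

lemma exists_orth:
  assumes qs: "set qs \<subseteq> carrier_vec n" and k: "length qs < n"
  shows "\<exists>v. v \<in> carrier_vec n \<and> v \<noteq> 0\<^sub>v n \<and> (\<forall>i<length qs. qs!i \<bullet> (v::real vec) = 0)"
proof -
  define k where "k = length qs"
  define c where "c = (\<lambda>i. if i < k then qs!i else 0\<^sub>v n)"
  define A where "A = mat\<^sub>r n n (\<lambda>i. if i = k then 0\<^sub>v n else c i)"
  have cc: "c \<in> {0..<n} \<rightarrow> carrier_vec n"
  proof
    fix i assume "i \<in> {0..<n}"
    show "c i \<in> carrier_vec n" using qs nth_mem[of i qs] unfolding c_def k_def by auto
  qed
  have "det A = 0" unfolding A_def by (rule det_row_0) (use k cc in \<open>auto simp: k_def\<close>)
  moreover have A: "A \<in> carrier_mat n n" unfolding A_def by auto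
  ultimately obtain v where v: "v \<in> carrier_vec n" "v \<noteq> 0\<^sub>v n" "A *\<^sub>v v = 0\<^sub>v n"
    using det_0_iff_vec_prod_zero[OF A] by blast
  have "qs!i \<bullet> v = 0" if "i < length qs" for i
  proof -
    have "(A *\<^sub>v v) $ i = 0" using v(3) that k by simp
    moreover have "(A *\<^sub>v v) $ i = row A i \<bullet> v" using that k A by simp
    moreover have qi: "qs!i \<in> carrier_vec n" using qs nth_mem[OF that] by auto
    moreover have "row A i = qs ! i" using that k qi unfolding A_def c_def k_def
      by (subst row_mat_of_row_fun) auto
    ultimately show ?thesis by simp
  qed
  thus ?thesis using v by blast
qed

lemma onl_complete:
  assumes "onl n qs" "length qs \<le> n"
  shows "\<exists>rs. onl n (qs @ rs) \<and> length (qs @ rs) = n"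
  using assms
proof (induction "n - length qs" arbitrary: qs)
  case 0
  thus ?case by (intro exI[of _ "[]"]) auto
next
  case (Suc d)
  have qs: "set qs \<subseteq> carrier_vec n" using Suc(3) unfolding onl_def by auto
  obtain v where v: "v \<in> carrier_vec n" "v \<noteq> 0\<^sub>v n" "\<forall>i<length qs. qs!i \<bullet> v = 0"
    using exists_orth[OF qs] Suc(2) by (metis zero_less_Suc zero_less_diff)
  define u where "u = (1 / sqrt (v \<bullet> v)) \<cdot>\<^sub>v v"
  have vv: "v \<bullet> v > 0" using sprod_self_pos[OF v(1,2)] .
  have u: "u \<in> carrier_vec n" unfolding u_def using v by auto
  have uu: "u \<bullet> u = 1" unfolding u_def using v vv
    by (simp add: smult_scalar_prod_distrib[of _ n] scalar_prod_smult_distrib[of _ n] power2_eq_square[symmetric])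
  have qu: "qs!i \<bullet> u = 0" if "i < length qs" for i
    unfolding u_def using v that qs nth_mem[OF that] by (subst scalar_prod_smult_distrib[of _ n]) auto
  have uq: "u \<bullet> qs!i = 0" if "i < length qs" for i
  proof -
    have qi: "qs!i \<in> carrier_vec n" using qs nth_mem[OF that] by auto
    show ?thesis using qu[OF that] comm_scalar_prod[OF u qi] by auto
  qed
  have onl': "onl n (qs @ [u])"
    unfolding onl_def
  proof (intro conjI allI impI)
    show "set (qs @ [u]) \<subseteq> carrier_vec n" using qs u by auto
    fix i j assume i: "i < length (qs @ [u])" and j: "j < length (qs @ [u])"
    show "(qs @ [u]) ! i \<bullet> (qs @ [u]) ! j = (if i = j then 1 else 0)"
      using Suc(3) i j uu qu uq unfolding onl_def
      by (cases "i < length qs"; cases "j < length qs") (auto simp: nth_append)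
  qed
  obtain rs where "onl n ((qs @ [u]) @ rs)" "length ((qs @ [u]) @ rs) = n"
    using Suc(1)[of "qs @ [u]"] Suc(2) onl' by force
  thus ?case by (intro exI[of _ "u # rs"]) auto
qed

lemma col_moc: "set B \<subseteq> carrier_vec n \<Longrightarrow> i < length B \<Longrightarrow> col (mat_of_cols n B) i = B!i"
  using col_mat_of_cols nth_mem by blast

lemma onl_gram:
  assumes "onl n B" "length B = m"
  shows "transpose_mat (mat_of_cols n B) * mat_of_cols n B = 1\<^sub>m m"
proof (rule eq_matI)
  have B: "set B \<subseteq> carrier_vec n" using assms unfolding onl_def by auto
  fix i j assume i: "i < dim_row (1\<^sub>m m)" and j: "j < dim_col (1\<^sub>m m)"
  have Bi: "B!i \<in> carrier_vec n" "B!j \<in> carrier_vec n" using B nth_mem i j assms(2) by auto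
  show "(transpose_mat (mat_of_cols n B) * mat_of_cols n B) $$ (i, j) = 1\<^sub>m m $$ (i, j)"
    using i j assms Bi B unfolding onl_def by (simp add: col_moc)
qed (use assms in auto)

lemma onl_gram2:
  assumes "onl n B" "length B = n"
  shows "mat_of_cols n B * transpose_mat (mat_of_cols n B) = 1\<^sub>m n"
  by (rule mat_mult_left_right_inverse[OF _ _ onl_gram[OF assms]]) (use assms in auto)

lemma transpose_cols_mult_vec:
  assumes "set B \<subseteq> carrier_vec n" "x \<in> carrier_vec n" "i < length B"
  shows "(transpose_mat (mat_of_cols n B) *\<^sub>v x) $ i = B!i \<bullet> x"
  using assms by (simp add: col_moc)

lemma normalize_vec:
  assumes v: "v \<in> carrier_vec n" "v \<noteq> 0\<^sub>v n"
  defines "u \<equiv> (1 / sqrt (v \<bullet> v)) \<cdot>\<^sub>v (v::real vec)"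
  shows "u \<in> carrier_vec n" "u \<bullet> u = 1" "\<And>x. x \<in> carrier_vec n \<Longrightarrow> x \<bullet> v = 0 \<Longrightarrow> x \<bullet> u = 0"
proof -
  have vv: "v \<bullet> v > 0" using sprod_self_pos[OF v] .
  show "u \<in> carrier_vec n" unfolding u_def using v by auto
  show "u \<bullet> u = 1" unfolding u_def using v vv
    by (simp add: smult_scalar_prod_distrib[of _ n] scalar_prod_smult_distrib[of _ n] power2_eq_square[symmetric])
  fix x assume "x \<in> carrier_vec n" "x \<bullet> v = 0"
  thus "x \<bullet> u = 0" unfolding u_def using v by (subst scalar_prod_smult_distrib[of _ n]) auto
qed

lemma onl_snoc:
  assumes o: "onl n qs" and u: "u \<in> carrier_vec n" "u \<bullet> u = 1" and qu: "\<forall>i<length qs. qs!i \<bullet> u = 0"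
  shows "onl n (qs @ [u])"
  unfolding onl_def
proof (intro conjI allI impI)
  have qs: "set qs \<subseteq> carrier_vec n" using o unfolding onl_def by auto
  have uq: "u \<bullet> qs!i = 0" if "i < length qs" for i
  proof -
    have qi: "qs!i \<in> carrier_vec n" using qs nth_mem[OF that] by auto
    show ?thesis using qu that comm_scalar_prod[OF u(1) qi] by auto
  qed
  show "set (qs @ [u]) \<subseteq> carrier_vec n" using qs u by auto
  fix i j assume i: "i < length (qs @ [u])" and j: "j < length (qs @ [u])"
  show "(qs @ [u]) ! i \<bullet> (qs @ [u]) ! j = (if i = j then 1 else 0)"
    using o i j u qu uq unfolding onl_def
    by (cases "i < length qs"; cases "j < length qs") (auto simp: nth_append)
qed

lemma eig_step:
  fixes M :: "real mat"
  assumes M: "M \<in> carrier_mat n n" "transpose_mat M = M" and o: "onl n qs" and k: "length qs < n"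
    and eig: "\<forall>i<length qs. M *\<^sub>v (qs!i) = ls!i \<cdot>\<^sub>v qs!i"
  shows "\<exists>q l. onl n (qs @ [q]) \<and> M *\<^sub>v q = l \<cdot>\<^sub>v q"
proof -
  define k where "k = length qs"
  obtain rs where ors: "onl n (qs @ rs)" "length (qs @ rs) = n" using onl_complete[OF o] k by auto
  define B where "B = qs @ rs"
  have oB: "onl n B" "length B = n" using ors B_def by auto
  have Bc: "set B \<subseteq> carrier_vec n" using oB unfolding onl_def by auto
  have Bi: "B!i \<in> carrier_vec n" if "i < n" for i using Bc nth_mem that oB by auto
  define Q where "Q = mat_of_cols n B"
  have Q: "Q \<in> carrier_mat n n" unfolding Q_def using oB by auto
  have QTQ: "transpose_mat Q * Q = 1\<^sub>m n" unfolding Q_def using onl_gram[OF oB] .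
  have QQT: "Q * transpose_mat Q = 1\<^sub>m n" unfolding Q_def using onl_gram2[OF oB] .
  define N' where "N' = transpose_mat Q * M * Q"
  have N': "N' \<in> carrier_mat n n" unfolding N'_def using Q M by auto
  have N'_ent: "N' $$ (a,b) = B!a \<bullet> (M *\<^sub>v B!b)" if "a < n" "b < n" for a b
  proof -
    have "N' = transpose_mat Q * (M * Q)" unfolding N'_def using Q M by (simp add: assoc_mult_mat)
    hence "N' $$ (a,b) = row (transpose_mat Q) a \<bullet> col (M * Q) b" using that Q M by simp
    also have "col (M * Q) b = M *\<^sub>v col Q b" by (rule col_mult2) (use that Q M in auto)
    also have "col Q b = B!b" unfolding Q_def using that oB Bc by (simp add: col_moc)
    also have "row (transpose_mat Q) a = B!a" unfolding Q_def using that oB Bc by (simp add: col_moc)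
    finally show ?thesis .
  qed
  have symsp: "x \<bullet> (M *\<^sub>v y) = (M *\<^sub>v x) \<bullet> y" if "x \<in> carrier_vec n" "y \<in> carrier_vec n" for x y
    using transpose_vec_mult_scalar[OF M(1) that(2) that(1)] M(2) by simp
  have N'sym: "N' $$ (a,b) = N' $$ (b,a)" if "a < n" "b < n" for a b
    using N'_ent that symsp Bi comm_scalar_prod M
    by (metis mult_mat_vec_carrier)
  define N where "N = mat (n-k) (n-k) (\<lambda>(a,b). N' $$ (a+k, b+k))"
  have N: "N \<in> carrier_mat (n-k) (n-k)" unfolding N_def by auto
  have Nsym: "transpose_mat N = N" unfolding N_def
    by (rule eq_matI) (auto simp: N'sym)
  obtain mu w where w: "w \<in> carrier_vec (n-k)" "w \<noteq> 0\<^sub>v (n-k)" "N *\<^sub>v w = mu \<cdot>\<^sub>v w"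
    using sym_real_eigvec[OF N Nsym] k unfolding k_def by auto
  define w' where "w' = vec n (\<lambda>i. if i < k then 0 else w $ (i-k))"
  have w': "w' \<in> carrier_vec n" unfolding w'_def by auto
  have Nw: "(\<Sum>c<n-k. N' $$ (i+k, c+k) * w $ c) = mu * w $ i" if "i < n-k" for i
  proof -
    have "(N *\<^sub>v w) $ i = mu * w $ i" using w that by simp
    moreover have "(N *\<^sub>v w) $ i = (\<Sum>c<n-k. N' $$ (i+k, c+k) * w $ c)"
      using that w(1) unfolding N_def by (simp add: scalar_prod_def atLeast0LessThan)
    ultimately show ?thesis by simp
  qed
  have N'w': "N' *\<^sub>v w' = mu \<cdot>\<^sub>v w'"
  proof (rule eq_vecI)
    show "dim_vec (N' *\<^sub>v w') = dim_vec (mu \<cdot>\<^sub>v w')" using N' w' by simp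
    fix i assume "i < dim_vec (mu \<cdot>\<^sub>v w')"
    hence i: "i < n" using w' by simp
    have "(N' *\<^sub>v w') $ i = (\<Sum>b<n. N' $$ (i,b) * w' $ b)"
      using i N' w' by (simp add: scalar_prod_def atLeast0LessThan)
    also have "\<dots> = (\<Sum>b\<in>{k..<n}. N' $$ (i,b) * w $ (b-k))"
    proof -
      have "(\<Sum>b<n. N' $$ (i,b) * w' $ b) = (\<Sum>b\<in>{0..<k} \<union> {k..<n}. N' $$ (i,b) * w' $ b)"
        using k unfolding k_def by (simp add: atLeast0LessThan ivl_disj_un(8))
      also have "\<dots> = (\<Sum>b\<in>{k..<n}. N' $$ (i,b) * w' $ b)"
      proof -
        have "(\<Sum>b\<in>{0..<k}. N' $$ (i,b) * w' $ b) = 0"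
          by (rule sum.neutral) (use k in \<open>auto simp: w'_def k_def\<close>)
        thus ?thesis by (subst sum.union_disjoint) auto
      qed
      also have "\<dots> = (\<Sum>b\<in>{k..<n}. N' $$ (i,b) * w $ (b-k))"
        by (intro sum.cong refl) (use k in \<open>auto simp: w'_def k_def\<close>)
      finally show ?thesis .
    qed
    also have "\<dots> = (mu \<cdot>\<^sub>v w') $ i"
    proof (cases "i < k")
      case True
      have "N' $$ (i,b) = 0" if "b \<in> {k..<n}" for b
      proof -
        have "N' $$ (i,b) = (M *\<^sub>v B!i) \<bullet> B!b" using N'_ent[of i b] symsp Bi i that by auto
        also have "M *\<^sub>v B!i = ls!i \<cdot>\<^sub>v B!i" using eig True unfolding B_def k_def by (simp add: nth_append)
        also have "(ls!i \<cdot>\<^sub>v B!i) \<bullet> B!b = ls!i * (B!i \<bullet> B!b)"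
          using Bi[of i] Bi[of b] i that by (simp add: smult_scalar_prod_distrib[of _ n])
        also have "B!i \<bullet> B!b = 0" using oB i that True unfolding onl_def by auto
        finally show ?thesis by simp
      qed
      thus ?thesis using True i w' by (simp add: w'_def)
    next
      case False
      have "(\<Sum>b\<in>{k..<n}. N' $$ (i,b) * w $ (b-k)) = (\<Sum>c<n-k. N' $$ (i,c+k) * w $ c)"
        by (rule sum.reindex_bij_witness[of _ "\<lambda>c. c+k" "\<lambda>b. b-k"]) auto
      also have "\<dots> = mu * w $ (i-k)" using Nw[of "i-k"] False i by simp
      finally show ?thesis using False i by (simp add: w'_def)
    qed
    finally show "(N' *\<^sub>v w') $ i = (mu \<cdot>\<^sub>v w') $ i" .
  qed
  define q0 where "q0 = Q *\<^sub>v w'"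
  have q0: "q0 \<in> carrier_vec n" unfolding q0_def using Q w' by auto
  have Mq0: "M *\<^sub>v q0 = mu \<cdot>\<^sub>v q0"
  proof -
    have "M *\<^sub>v q0 = (Q * transpose_mat Q) *\<^sub>v (M *\<^sub>v q0)" using QQT M q0 by simp
    also have "\<dots> = Q *\<^sub>v (N' *\<^sub>v w')" unfolding N'_def q0_def using Q M w'
      by (simp add: assoc_mult_mat_vec[of _ n n _ n])
    also have "\<dots> = mu \<cdot>\<^sub>v q0" unfolding N'w' q0_def using Q w' by (simp add: mult_mat_vec)
    finally show ?thesis .
  qed
  have QTq0: "transpose_mat Q *\<^sub>v q0 = w'" unfolding q0_def using QTQ Q w'
    by (simp add: assoc_mult_mat_vec[symmetric, of _ n n _ n])
  have w'0: "w' \<noteq> 0\<^sub>v n"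
  proof
    assume "w' = 0\<^sub>v n"
    have "w $ c = 0" if "c < n - k" for c
    proof -
      have "w' $ (c+k) = 0" using \<open>w' = 0\<^sub>v n\<close> that by auto
      thus ?thesis using that unfolding w'_def by auto
    qed
    hence "w = 0\<^sub>v (n-k)" using w(1) by (intro eq_vecI) auto
    thus False using w by auto
  qed
  have q00: "q0 \<noteq> 0\<^sub>v n" using QTq0 w'0 Q by auto
  have qorth: "qs!i \<bullet> q0 = 0" if "i < length qs" for i
  proof -
    have "(transpose_mat Q *\<^sub>v q0) $ i = B!i \<bullet> q0"
      unfolding Q_def using transpose_cols_mult_vec[OF Bc q0] that k oB unfolding k_def by auto
    moreover have "B!i = qs!i" unfolding B_def using that by (simp add: nth_append)
    ultimately show ?thesis using QTq0 that k unfolding w'_def k_def by auto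
  qed
  define u where "u = (1 / sqrt (q0 \<bullet> q0)) \<cdot>\<^sub>v q0"
  note nu = normalize_vec[OF q0 q00, folded u_def]
  have qsc: "set qs \<subseteq> carrier_vec n" using o unfolding onl_def by auto
  have "\<forall>i<length qs. qs!i \<bullet> u = 0" using nu(3) qorth qsc nth_mem by blast
  hence "onl n (qs @ [u])" using onl_snoc[OF o nu(1,2)] by blast
  moreover have "M *\<^sub>v u = mu \<cdot>\<^sub>v u" unfolding u_def using Mq0 M q0
    by (simp add: mult_mat_vec smult_smult_assoc mult.commute)
  ultimately show ?thesis by blast
qed

lemma spectral:
  fixes M :: "real mat"
  assumes M: "M \<in> carrier_mat n n" "transpose_mat M = M"
  shows "\<exists>qs ls. onl n qs \<and> length qs = n \<and> length ls = n \<and> (\<forall>i<n. M *\<^sub>v (qs!i) = ls!i \<cdot>\<^sub>v qs!i)"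
proof -
  have "\<exists>qs ls. onl n qs \<and> length qs = k \<and> length ls = k \<and> (\<forall>i<k. M *\<^sub>v (qs!i) = ls!i \<cdot>\<^sub>v qs!i)"
    if "k \<le> n" for k
    using that
  proof (induction k)
    case 0
    show ?case by (intro exI[of _ "[]"]) (auto simp: onl_def)
  next
    case (Suc k)
    then obtain qs ls where IH: "onl n qs" "length qs = k" "length ls = k"
      "\<forall>i<k. M *\<^sub>v (qs!i) = ls!i \<cdot>\<^sub>v qs!i" by auto
    obtain q l where ql: "onl n (qs @ [q])" "M *\<^sub>v q = l \<cdot>\<^sub>v q"
      using eig_step[OF M IH(1), of ls] IH Suc(2) by auto
    show ?case
    proof (intro exI[of _ "qs @ [q]"] exI[of _ "ls @ [l]"] conjI allI impI)
      fix i assume "i < Suc k"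
      thus "M *\<^sub>v (qs @ [q]) ! i = (ls @ [l]) ! i \<cdot>\<^sub>v (qs @ [q]) ! i"
        using IH ql by (cases "i < k") (auto simp: nth_append)
    qed (use IH ql in auto)
  qed
  thus ?thesis by blast
qed

lemma proots_lin_prod: "proots (\<Prod>l\<leftarrow>ls. [:- l, 1:]) = mset (ls :: real list)"
proof (induction ls)
  case Nil
  then show ?case by simp
next
  case (Cons a ls)
  have "(\<Prod>l\<leftarrow>ls. [:- l, 1:]) \<noteq> 0" by (auto simp: prod_list_zero_iff)
  have "proots (\<Prod>l\<leftarrow>a#ls. [:-l,1:]) = proots ([:-a,1:] * (\<Prod>l\<leftarrow>ls. [:-l,1:]))" by simp
  also have "\<dots> = proots [:-a,1:] + proots (\<Prod>l\<leftarrow>ls. [:-l,1:])"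
    by (rule proots_mult) (use \<open>(\<Prod>l\<leftarrow>ls. [:- l, 1:]) \<noteq> 0\<close> in auto)
  also have "\<dots> = {#a#} + mset ls" using Cons proots_linear_factor[of "-a"] by simp
  finally show ?case by simp
qed

lemma char_poly_spectral:
  fixes M :: "real mat"
  assumes M: "M \<in> carrier_mat n n" and o: "onl n qs" "length qs = n" and ls: "length ls = n"
    and eig: "\<forall>i<n. M *\<^sub>v (qs!i) = ls!i \<cdot>\<^sub>v qs!i"
  shows "char_poly M = (\<Prod>l\<leftarrow>ls. [:- l, 1:])"
proof -
  have qc: "set qs \<subseteq> carrier_vec n" using o unfolding onl_def by auto
  define Q where "Q = mat_of_cols n qs"
  define D where "D = mat n n (\<lambda>(i,j). if i = j then ls!i else 0)"
  have Q: "Q \<in> carrier_mat n n" unfolding Q_def using o by auto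
  have D: "D \<in> carrier_mat n n" unfolding D_def by auto
  have QTQ: "transpose_mat Q * Q = 1\<^sub>m n" unfolding Q_def using onl_gram[OF o] .
  have QQT: "Q * transpose_mat Q = 1\<^sub>m n" unfolding Q_def using onl_gram2[OF o] .
  have MQ: "M * Q = Q * D"
  proof (rule eq_matI)
    fix i j assume i: "i < dim_row (Q * D)" and j: "j < dim_col (Q * D)"
    hence i: "i < n" and j: "j < n" using Q D by auto
    have qj: "qs!j \<in> carrier_vec n" using qc nth_mem j o by auto
    have "(M * Q) $$ (i,j) = (M *\<^sub>v qs!j) $ i" using i j M Q qc o unfolding Q_def
      by (simp add: col_moc)
    also have "\<dots> = ls!j * qs!j $ i" using eig j i qj by simp
    also have "\<dots> = (Q * D) $$ (i,j)"
    proof -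
      have "(Q * D) $$ (i,j) = (\<Sum>k<n. Q $$ (i,k) * D $$ (k,j))"
        using i j Q D by (simp add: scalar_prod_def atLeast0LessThan)
      also have "\<dots> = Q $$ (i,j) * ls!j"
        by (subst sum.remove[of _ j]) (use j i in \<open>auto simp: D_def intro!: sum.neutral\<close>)
      also have "Q $$ (i,j) = qs!j $ i" unfolding Q_def using i j o by (simp add: mat_of_cols_index)
      finally show ?thesis by simp
    qed
    finally show "(M * Q) $$ (i,j) = (Q * D) $$ (i,j)" .
  qed (use M Q D in auto)
  have "M = M * (Q * transpose_mat Q)" using QQT M by simp
  also have "\<dots> = (M * Q) * transpose_mat Q" by (rule assoc_mult_mat[symmetric]) (use M Q in auto)
  also have "\<dots> = Q * D * transpose_mat Q" by (simp only: MQ)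
  finally have MQD: "M = Q * D * transpose_mat Q" .
  have "similar_mat_wit M D Q (transpose_mat Q)" unfolding similar_mat_wit_def Let_def
    using M Q D QQT QTQ MQD by auto
  hence "similar_mat M D" unfolding similar_mat_def by blast
  hence "char_poly M = char_poly D" by (rule char_poly_similar)
  also have "\<dots> = (\<Prod>a\<leftarrow>diag_mat D. [:- a, 1:])"
    by (rule char_poly_upper_triangular[OF D]) (auto simp: D_def upper_triangular_def)
  also have "diag_mat D = ls" unfolding diag_mat_def using ls
    by (intro nth_equalityI) (auto simp: D_def)
  finally show ?thesis .
qed


lemma nuc_repr:
  fixes A :: "real mat"
  assumes A: "A \<in> carrier_mat m n"
  shows "\<exists>qs. onl n qs \<and> length qs = n \<and> nuc_norm A = (\<Sum>i<n. vnorm (A *\<^sub>v qs!i)) \<and>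
     (\<forall>i<n. \<forall>j<n. i \<noteq> j \<longrightarrow> (A *\<^sub>v qs!i) \<bullet> (A *\<^sub>v qs!j) = 0)"
proof -
  define M where "M = transpose_mat A * A"
  have M: "M \<in> carrier_mat n n" unfolding M_def using A by auto
  have Ms: "transpose_mat M = M" unfolding M_def using A by (simp add: transpose_mult[of _ n m _ n])
  obtain qs ls where sp: "onl n qs" "length qs = n" "length ls = n" "\<forall>i<n. M *\<^sub>v (qs!i) = ls!i \<cdot>\<^sub>v qs!i"
    using spectral[OF M Ms] by blast
  have qc: "set qs \<subseteq> carrier_vec n" using sp unfolding onl_def by auto
  have qi: "qs!i \<in> carrier_vec n" if "i < n" for i using qc nth_mem that sp by auto
  have key: "(A *\<^sub>v qs!i) \<bullet> (A *\<^sub>v qs!j) = ls!i * (qs!i \<bullet> qs!j)" if "i < n" "j < n" for i j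
  proof -
    have Aqi: "A *\<^sub>v qs!i \<in> carrier_vec m" using A qi[OF that(1)] by auto
    have "(A *\<^sub>v qs!i) \<bullet> (A *\<^sub>v qs!j) = (transpose_mat A *\<^sub>v (A *\<^sub>v qs!i)) \<bullet> qs!j"
      using transpose_vec_mult_scalar[OF A qi[OF that(2)] Aqi] by simp
    also have "transpose_mat A *\<^sub>v (A *\<^sub>v qs!i) = M *\<^sub>v qs!i" unfolding M_def
      by (rule assoc_mult_mat_vec[symmetric]) (use A qi that in auto)
    also have "\<dots> = ls!i \<cdot>\<^sub>v qs!i" using sp that by auto
    also have "(ls!i \<cdot>\<^sub>v qs!i) \<bullet> qs!j = ls!i * (qs!i \<bullet> qs!j)"
      using qi that by (simp add: smult_scalar_prod_distrib[of _ n])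
    finally show ?thesis .
  qed
  have lsi: "ls!i = (A *\<^sub>v qs!i) \<bullet> (A *\<^sub>v qs!i)" if "i < n" for i
    using key[OF that that] sp that unfolding onl_def by auto
  have "nuc_norm A = sum_mset (image_mset sqrt (mset ls))"
    unfolding nuc_norm_def char_poly_spectral[OF M sp] proots_lin_prod M_def[symmetric] ..
  also have "\<dots> = sum_list (map sqrt ls)" by (metis mset_map sum_mset_sum_list)
  also have "\<dots> = (\<Sum>i<n. sqrt (ls!i))"
    using sp(3) by (simp add: sum_list_sum_nth atLeast0LessThan)
  also have "\<dots> = (\<Sum>i<n. vnorm (A *\<^sub>v qs!i))" unfolding vnorm_def using lsi by simp
  finally show ?thesis using sp key unfolding onl_def by (intro exI[of _ qs]) auto
qed

lemma onl_coef:
  assumes "onl n qs" "length qs = n" "j < n" "l < n"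
  shows "(\<Sum>i<n. qs!i $ j * qs!i $ l) = (if j = l then 1 else 0)"
proof -
  have qc: "set qs \<subseteq> carrier_vec n" using assms unfolding onl_def by auto
  have "(mat_of_cols n qs * transpose_mat (mat_of_cols n qs)) $$ (j,l) = (if j = l then 1 else 0)"
    using onl_gram2[OF assms(1,2)] assms by simp
  moreover have "(mat_of_cols n qs * transpose_mat (mat_of_cols n qs)) $$ (j,l) = (\<Sum>i<n. qs!i $ j * qs!i $ l)"
    using assms by (simp add: scalar_prod_def atLeast0LessThan mat_of_cols_index)
  ultimately show ?thesis by simp
qed

lemma col_sprod: "A \<in> carrier_mat m n \<Longrightarrow> v \<in> carrier_vec m \<Longrightarrow> j < n \<Longrightarrow>
   col A j \<bullet> v = (\<Sum>k<m. A $$ (k,j) * v $ k)"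
  by (simp add: scalar_prod_def atLeast0LessThan)

lemma sprod_eq: "x \<in> carrier_vec n \<Longrightarrow> y \<in> carrier_vec n \<Longrightarrow> x \<bullet> y = (\<Sum>k<n. x$k * y$k)"
  by (simp add: scalar_prod_def atLeast0LessThan)

lemma vnorm_ge0: "vnorm v \<ge> 0" unfolding vnorm_def using sprod_self_ge0 by simp

lemma vnorm_sq: "(vnorm v)^2 = v \<bullet> v" unfolding vnorm_def using sprod_self_ge0 by simp

lemma vec_cs: assumes "x \<in> carrier_vec n" "y \<in> carrier_vec n"
  shows "x \<bullet> (y::real vec) \<le> vnorm x * vnorm y"
proof -
  have "x \<bullet> y = (\<Sum>k<n. x$k * y$k)" using assms by (rule sprod_eq)
  also have "\<dots> \<le> sqrt (\<Sum>k<n. (x$k)^2) * sqrt (\<Sum>k<n. (y$k)^2)" by (rule cs_sum) auto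
  also have "\<dots> = vnorm x * vnorm y" unfolding vnorm_def sprod_self_eq using assms by simp
  finally show ?thesis .
qed

lemma row_sprod: "A \<in> carrier_mat m n \<Longrightarrow> v \<in> carrier_vec n \<Longrightarrow> i < m \<Longrightarrow>
   row A i \<bullet> v = (\<Sum>k<n. A $$ (i,k) * v $ k)"
  by (simp add: scalar_prod_def atLeast0LessThan)

lemma mult_mat_vec_eq: "A \<in> carrier_mat m n \<Longrightarrow> v \<in> carrier_vec n \<Longrightarrow> i < m \<Longrightarrow>
   (A *\<^sub>v v) $ i = (\<Sum>k<n. A $$ (i,k) * v $ k)"
  by (simp add: scalar_prod_def atLeast0LessThan)

lemma frob_inner_onl:
  fixes A B :: "real mat"
  assumes A: "A \<in> carrier_mat m n" and B: "B \<in> carrier_mat m n" and o: "onl n qs" "length qs = n"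
  shows "frob_inner B A = (\<Sum>i<n. (B *\<^sub>v qs!i) \<bullet> (A *\<^sub>v qs!i))"
proof -
  have qc: "set qs \<subseteq> carrier_vec n" using o unfolding onl_def by auto
  have qi: "qs!i \<in> carrier_vec n" if "i < n" for i using qc nth_mem that o by auto
  have "(\<Sum>i<n. (B *\<^sub>v qs!i) \<bullet> (A *\<^sub>v qs!i))
      = (\<Sum>i<n. \<Sum>r<m. (\<Sum>j<n. B $$ (r,j) * qs!i $ j) * (\<Sum>l<n. A $$ (r,l) * qs!i $ l))"
  proof (intro sum.cong refl)
    fix i assume "i \<in> {..<n}"
    hence q: "qs!i \<in> carrier_vec n" using qi by auto
    have "(B *\<^sub>v qs!i) \<bullet> (A *\<^sub>v qs!i) = (\<Sum>r<m. (B *\<^sub>v qs!i) $ r * (A *\<^sub>v qs!i) $ r)"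
      by (rule sprod_eq) (use A B q in auto)
    also have "\<dots> = (\<Sum>r<m. (\<Sum>j<n. B $$ (r,j) * qs!i $ j) * (\<Sum>l<n. A $$ (r,l) * qs!i $ l))"
      by (intro sum.cong refl) (use A B q in \<open>simp add: row_sprod\<close>)
    finally show "(B *\<^sub>v qs!i) \<bullet> (A *\<^sub>v qs!i) = \<dots>" .
  qed
  also have "\<dots> = (\<Sum>i<n. \<Sum>r<m. \<Sum>l<n. \<Sum>j<n. B $$ (r,j) * A $$ (r,l) * (qs!i $ j * qs!i $ l))"
    by (simp add: sum_product mult_ac)
  also have "\<dots> = (\<Sum>r<m. \<Sum>i<n. \<Sum>l<n. \<Sum>j<n. B $$ (r,j) * A $$ (r,l) * (qs!i $ j * qs!i $ l))"
    by (rule sum.swap)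
  also have "\<dots> = (\<Sum>r<m. \<Sum>l<n. \<Sum>i<n. \<Sum>j<n. B $$ (r,j) * A $$ (r,l) * (qs!i $ j * qs!i $ l))"
    by (rule sum.cong[OF refl], rule sum.swap)
  also have "\<dots> = (\<Sum>r<m. \<Sum>l<n. \<Sum>j<n. \<Sum>i<n. B $$ (r,j) * A $$ (r,l) * (qs!i $ j * qs!i $ l))"
    by (rule sum.cong[OF refl], rule sum.cong[OF refl], rule sum.swap)
  also have "\<dots> = (\<Sum>r<m. \<Sum>l<n. \<Sum>j<n. B $$ (r,j) * A $$ (r,l) * (\<Sum>i<n. qs!i $ j * qs!i $ l))"
    by (simp add: sum_distrib_left)
  also have "\<dots> = (\<Sum>r<m. \<Sum>l<n. \<Sum>j<n. B $$ (r,j) * A $$ (r,l) * (if j = l then 1 else 0))"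
    by (intro sum.cong refl) (simp add: onl_coef[OF o])
  also have "\<dots> = (\<Sum>r<m. \<Sum>j<n. B $$ (r,j) * A $$ (r,j))"
    by (simp add: if_distrib[of "\<lambda>x. _ * x"] cong: if_cong)
  also have "\<dots> = frob_inner B A" unfolding frob_inner_def using B by simp
  finally show ?thesis by simp
qed

lemma nuc_dual:
  fixes A B :: "real mat"
  assumes A: "A \<in> carrier_mat m n" and B: "B \<in> carrier_mat m n"
    and bnd: "\<forall>v\<in>carrier_vec n. vnorm (B *\<^sub>v v) \<le> vnorm v"
  shows "frob_inner B A \<le> nuc_norm A"
proof -
  obtain qs where q: "onl n qs" "length qs = n" "nuc_norm A = (\<Sum>i<n. vnorm (A *\<^sub>v qs!i))"
    using nuc_repr[OF A] by blast
  have qi: "qs!i \<in> carrier_vec n" if "i < n" for i using q nth_mem that unfolding onl_def by auto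
  have "frob_inner B A = (\<Sum>i<n. (B *\<^sub>v qs!i) \<bullet> (A *\<^sub>v qs!i))" by (rule frob_inner_onl[OF A B q(1,2)])
  also have "\<dots> \<le> (\<Sum>i<n. vnorm (A *\<^sub>v qs!i))"
  proof (rule sum_mono)
    fix i assume "i \<in> {..<n}"
    hence i: "i < n" by auto
    have n1: "vnorm (qs!i) = 1" using q i unfolding onl_def vnorm_def by auto
    have "(B *\<^sub>v qs!i) \<bullet> (A *\<^sub>v qs!i) \<le> vnorm (B *\<^sub>v qs!i) * vnorm (A *\<^sub>v qs!i)"
      by (rule vec_cs[of _ m]) (use A B qi[OF i] in auto)
    also have "\<dots> \<le> 1 * vnorm (A *\<^sub>v qs!i)"
      by (rule mult_right_mono) (use bnd qi[OF i] n1 vnorm_ge0 in auto)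
    finally show "(B *\<^sub>v qs!i) \<bullet> (A *\<^sub>v qs!i) \<le> vnorm (A *\<^sub>v qs!i)" by simp
  qed
  finally show ?thesis using q(3) by simp
qed

lemma bessel:
  fixes E :: "'i \<Rightarrow> 'k \<Rightarrow> real" and u :: "'k \<Rightarrow> real"
  assumes fin: "finite I" "finite K"
    and orth: "\<And>i l. i \<in> I \<Longrightarrow> l \<in> I \<Longrightarrow> i \<noteq> l \<Longrightarrow> (\<Sum>k\<in>K. E i k * E l k) = 0"
    and nrm: "\<And>i. i \<in> I \<Longrightarrow> (\<Sum>k\<in>K. (E i k)^2) \<le> 1"
  shows "(\<Sum>i\<in>I. (\<Sum>k\<in>K. u k * E i k)^2) \<le> (\<Sum>k\<in>K. (u k)^2)"
proof -
  define c where "c i = (\<Sum>k\<in>K. u k * E i k)" for i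
  have e1: "(\<Sum>k\<in>K. (u k - (\<Sum>i\<in>I. c i * E i k))^2) = (\<Sum>k\<in>K. (u k)^2)
      - 2 * (\<Sum>k\<in>K. u k * (\<Sum>i\<in>I. c i * E i k)) + (\<Sum>k\<in>K. (\<Sum>i\<in>I. c i * E i k)^2)"
    by (simp add: power2_diff sum.distrib sum_subtractf sum_distrib_left mult.assoc)
  have e2: "(\<Sum>k\<in>K. u k * (\<Sum>i\<in>I. c i * E i k)) = (\<Sum>i\<in>I. (c i)^2)"
  proof -
    have "(\<Sum>k\<in>K. u k * (\<Sum>i\<in>I. c i * E i k)) = (\<Sum>k\<in>K. \<Sum>i\<in>I. c i * (u k * E i k))"
      by (simp add: sum_distrib_left mult_ac)
    also have "\<dots> = (\<Sum>i\<in>I. \<Sum>k\<in>K. c i * (u k * E i k))" by (rule sum.swap)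
    also have "\<dots> = (\<Sum>i\<in>I. (c i)^2)" by (simp add: sum_distrib_left[symmetric] c_def power2_eq_square)
    finally show ?thesis .
  qed
  have e3: "(\<Sum>k\<in>K. (\<Sum>i\<in>I. c i * E i k)^2) = (\<Sum>i\<in>I. (c i)^2 * (\<Sum>k\<in>K. (E i k)^2))"
  proof -
    have "(\<Sum>k\<in>K. (\<Sum>i\<in>I. c i * E i k)^2) = (\<Sum>k\<in>K. \<Sum>i\<in>I. \<Sum>l\<in>I. c i * c l * (E i k * E l k))"
      by (simp add: power2_eq_square sum_product mult_ac)
    also have "\<dots> = (\<Sum>i\<in>I. \<Sum>k\<in>K. \<Sum>l\<in>I. c i * c l * (E i k * E l k))" by (rule sum.swap)
    also have "\<dots> = (\<Sum>i\<in>I. \<Sum>l\<in>I. \<Sum>k\<in>K. c i * c l * (E i k * E l k))"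
      by (rule sum.cong[OF refl], rule sum.swap)
    also have "\<dots> = (\<Sum>i\<in>I. \<Sum>l\<in>I. c i * c l * (\<Sum>k\<in>K. E i k * E l k))"
      by (simp add: sum_distrib_left)
    also have "\<dots> = (\<Sum>i\<in>I. c i * c i * (\<Sum>k\<in>K. E i k * E i k))"
    proof (rule sum.cong[OF refl])
      fix i assume i: "i \<in> I"
      show "(\<Sum>l\<in>I. c i * c l * (\<Sum>k\<in>K. E i k * E l k)) = c i * c i * (\<Sum>k\<in>K. E i k * E i k)"
      proof -
        have "(\<Sum>l\<in>I-{i}. c i * c l * (\<Sum>k\<in>K. E i k * E l k)) = 0"
          by (rule sum.neutral) (use orth i in auto)
        thus ?thesis by (subst sum.remove[OF fin(1) i]) simp
      qed
    qed
    finally show ?thesis by (simp add: power2_eq_square)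
  qed
  have "0 \<le> (\<Sum>k\<in>K. (u k - (\<Sum>i\<in>I. c i * E i k))^2)" by (simp add: sum_nonneg)
  hence "0 \<le> (\<Sum>k\<in>K. (u k)^2) - 2 * (\<Sum>i\<in>I. (c i)^2) + (\<Sum>i\<in>I. (c i)^2 * (\<Sum>k\<in>K. (E i k)^2))"
    using e1 e2 e3 by simp
  moreover have "(\<Sum>i\<in>I. (c i)^2 * (\<Sum>k\<in>K. (E i k)^2)) \<le> (\<Sum>i\<in>I. (c i)^2)"
    by (rule sum_mono) (use nrm in \<open>auto intro: mult_left_le\<close>)
  ultimately show ?thesis unfolding c_def by simp
qed

lemma parseval:
  assumes o: "onl n qs" "length qs = n" and v: "v \<in> carrier_vec n"
  shows "(\<Sum>i<n. (v \<bullet> qs!i)^2) = v \<bullet> v"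
proof -
  have qi: "qs!i \<in> carrier_vec n" if "i < n" for i using o nth_mem that unfolding onl_def by auto
  have "(\<Sum>i<n. (v \<bullet> qs!i)^2) = (\<Sum>i<n. (\<Sum>k<n. v$k * qs!i$k)^2)"
    by (intro sum.cong refl) (use v qi in \<open>simp add: sprod_eq\<close>)
  also have "\<dots> = (\<Sum>i<n. \<Sum>k<n. \<Sum>l<n. v$k * v$l * (qs!i$k * qs!i$l))"
    by (simp add: power2_eq_square sum_product mult_ac)
  also have "\<dots> = (\<Sum>k<n. \<Sum>i<n. \<Sum>l<n. v$k * v$l * (qs!i$k * qs!i$l))" by (rule sum.swap)
  also have "\<dots> = (\<Sum>k<n. \<Sum>l<n. \<Sum>i<n. v$k * v$l * (qs!i$k * qs!i$l))"
    by (rule sum.cong[OF refl], rule sum.swap)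
  also have "\<dots> = (\<Sum>k<n. \<Sum>l<n. v$k * v$l * (if k = l then 1 else 0))"
    by (simp add: sum_distrib_left[symmetric] onl_coef[OF o])
  also have "\<dots> = (\<Sum>k<n. v$k * v$k)" by (simp add: if_distrib[of "\<lambda>x. _ * x"] cong: if_cong)
  also have "\<dots> = v \<bullet> v" using v by (simp add: sprod_eq)
  finally show ?thesis .
qed

lemma nuc_upper:
  fixes U S V :: "real mat"
  assumes U: "U \<in> carrier_mat m r" and S: "S \<in> carrier_mat r r" and V: "V \<in> carrier_mat n r"
    and UU: "transpose_mat U * U = 1\<^sub>m r" and VV: "transpose_mat V * V = 1\<^sub>m r"
    and Sd: "\<forall>i<r. \<forall>j<r. i \<noteq> j \<longrightarrow> S $$ (i,j) = 0" and Sp: "\<forall>i<r. S $$ (i,i) \<ge> 0"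
  shows "nuc_norm (U * S * transpose_mat V) \<le> (\<Sum>j<r. S $$ (j,j))"
proof -
  define A where "A = U * S * transpose_mat V"
  have A: "A \<in> carrier_mat m n" unfolding A_def using U S V by auto
  obtain qs where q: "onl n qs" "length qs = n" "nuc_norm A = (\<Sum>i<n. vnorm (A *\<^sub>v qs!i))"
    and orthA: "\<forall>i<n. \<forall>j<n. i \<noteq> j \<longrightarrow> (A *\<^sub>v qs!i) \<bullet> (A *\<^sub>v qs!j) = 0"
    using nuc_repr[OF A] by blast
  have qi: "qs!i \<in> carrier_vec n" if "i < n" for i using q nth_mem that unfolding onl_def by auto
  define a where "a i = A *\<^sub>v qs!i" for i
  have ai: "a i \<in> carrier_vec m" if "i < n" for i unfolding a_def using A qi[OF that] by auto
  define e where "e i = (if a i \<bullet> a i = 0 then 0\<^sub>v m else (1 / vnorm (a i)) \<cdot>\<^sub>v a i)" for i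
  have ei: "e i \<in> carrier_vec m" if "i < n" for i unfolding e_def using ai[OF that] by auto
  have E1: "vnorm (a i) = e i \<bullet> a i" if "i < n" for i
  proof (cases "a i \<bullet> a i = 0")
    case True
    thus ?thesis unfolding e_def vnorm_def using ai[OF that] by simp
  next
    case False
    hence pos: "vnorm (a i) > 0" unfolding vnorm_def using sprod_self_ge0[of "a i"] by simp
    have "e i \<bullet> a i = (1 / vnorm (a i)) * (a i \<bullet> a i)" unfolding e_def using False ai[OF that]
      by (simp add: smult_scalar_prod_distrib[of _ m])
    also have "a i \<bullet> a i = (vnorm (a i))^2" by (simp add: vnorm_sq)
    finally show ?thesis using pos by (simp add: power2_eq_square)
  qed
  have E2: "e i \<bullet> e l = 0" if "i < n" "l < n" "i \<noteq> l" for i l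
  proof -
    have "a i \<bullet> a l = 0" using orthA that unfolding a_def by auto
    thus ?thesis unfolding e_def using ai that
      by (simp add: smult_scalar_prod_distrib[of _ m] scalar_prod_smult_distrib[of _ m])
  qed
  have E3: "e i \<bullet> e i \<le> 1" if "i < n" for i
  proof (cases "a i \<bullet> a i = 0")
    case True
    thus ?thesis unfolding e_def by simp
  next
    case False
    have "e i \<bullet> e i = (1 / vnorm (a i))^2 * (a i \<bullet> a i)" unfolding e_def using False ai[OF that]
      by (simp add: smult_scalar_prod_distrib[of _ m] scalar_prod_smult_distrib[of _ m] power2_eq_square)
    also have "a i \<bullet> a i = (vnorm (a i))^2" by (simp add: vnorm_sq)
    finally show ?thesis using False by (simp add: vnorm_sq power_divide)
  qed
  define y where "y i = transpose_mat V *\<^sub>v qs!i" for i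
  have yi: "y i \<in> carrier_vec r" if "i < n" for i unfolding y_def using V qi[OF that] by auto
  define c where "c i = transpose_mat U *\<^sub>v e i" for i
  have ci: "c i \<in> carrier_vec r" if "i < n" for i unfolding c_def using U ei[OF that] by auto
  have Sy: "(S *\<^sub>v v) $ j = S $$ (j,j) * v $ j" if "v \<in> carrier_vec r" "j < r" for v j
  proof -
    have "(S *\<^sub>v v) $ j = (\<Sum>k<r. S $$ (j,k) * v $ k)" using S that by (simp add: row_sprod)
    also have "\<dots> = S $$ (j,j) * v $ j"
    proof -
      have "(\<Sum>k\<in>{..<r}-{j}. S $$ (j,k) * v $ k) = 0" by (rule sum.neutral) (use Sd that in auto)
      thus ?thesis by (subst sum.remove[of _ j]) (use that in auto)
    qed
    finally show ?thesis .
  qed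
  have trm: "vnorm (a i) = (\<Sum>j<r. S $$ (j,j) * (c i $ j * y i $ j))" if "i < n" for i
  proof -
    have "a i = (U * S) *\<^sub>v (transpose_mat V *\<^sub>v qs!i)" unfolding a_def A_def
      by (rule assoc_mult_mat_vec) (use U S V qi[OF that] in auto)
    also have "\<dots> = U *\<^sub>v (S *\<^sub>v y i)" unfolding y_def
      by (rule assoc_mult_mat_vec) (use U S V qi[OF that] in auto)
    finally have "a i = U *\<^sub>v (S *\<^sub>v y i)" .
    hence "e i \<bullet> a i = e i \<bullet> (U *\<^sub>v (S *\<^sub>v y i))" by simp
    also have "\<dots> = c i \<bullet> (S *\<^sub>v y i)" unfolding c_def
      by (rule transpose_vec_mult_scalar[symmetric, OF U _ ei[OF that]]) (use S yi[OF that] in auto)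
    also have "\<dots> = (\<Sum>j<r. c i $ j * (S *\<^sub>v y i) $ j)" using ci[OF that] S yi[OF that] by (simp add: sprod_eq)
    also have "\<dots> = (\<Sum>j<r. S $$ (j,j) * (c i $ j * y i $ j))"
      by (intro sum.cong refl) (use Sy yi[OF that] in auto)
    finally show ?thesis using E1[OF that] by simp
  qed
  have cy: "(\<Sum>i<n. c i $ j * y i $ j) \<le> 1" if j: "j < r" for j
  proof -
    have cU: "c i $ j = (\<Sum>k<m. U $$ (k,j) * e i $ k)" if "i < n" for i
      unfolding c_def using U ei[OF that] j by (simp add: col_sprod)
    have yV: "y i $ j = col V j \<bullet> qs!i" if "i < n" for i
      unfolding y_def using V qi[OF that] j by simp
    have s1: "(\<Sum>i<n. (c i $ j)^2) \<le> 1"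
    proof -
      have "(\<Sum>i<n. (c i $ j)^2) = (\<Sum>i<n. (\<Sum>k<m. U $$ (k,j) * e i $ k)^2)" by (simp add: cU)
      also have "\<dots> \<le> (\<Sum>k<m. (U $$ (k,j))^2)"
      proof (rule bessel)
        fix i l assume "i \<in> {..<n}" "l \<in> {..<n}" "i \<noteq> l"
        thus "(\<Sum>k<m. e i $ k * e l $ k) = 0" using E2 ei by (simp add: sprod_eq[symmetric])
      next
        fix i assume "i \<in> {..<n}"
        thus "(\<Sum>k<m. (e i $ k)^2) \<le> 1" using E3 ei by (simp add: sprod_eq[symmetric] power2_eq_square)
      qed auto
      also have "\<dots> = (transpose_mat U * U) $$ (j,j)" using U j
        by (simp add: scalar_prod_def atLeast0LessThan power2_eq_square)
      also have "\<dots> = 1" using UU j by simp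
      finally show ?thesis .
    qed
    have s2: "(\<Sum>i<n. (y i $ j)^2) = 1"
    proof -
      have cV: "col V j \<in> carrier_vec n" using V by auto
      have "(\<Sum>i<n. (y i $ j)^2) = (\<Sum>i<n. (col V j \<bullet> qs!i)^2)" by (simp add: yV)
      also have "\<dots> = col V j \<bullet> col V j" by (rule parseval[OF q(1,2) cV])
      also have "\<dots> = (transpose_mat V * V) $$ (j,j)" using V j by simp
      also have "\<dots> = 1" using VV j by simp
      finally show ?thesis .
    qed
    have "(\<Sum>i<n. c i $ j * y i $ j) \<le> (\<Sum>i<n. ((c i $ j)^2 + (y i $ j)^2) / 2)"
    proof (rule sum_mono)
      fix i
      have "0 \<le> (c i $ j - y i $ j)^2" by simp
      thus "c i $ j * y i $ j \<le> ((c i $ j)^2 + (y i $ j)^2) / 2" by (simp add: power2_diff)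
    qed
    also have "\<dots> = ((\<Sum>i<n. (c i $ j)^2) + (\<Sum>i<n. (y i $ j)^2)) / 2"
      by (simp add: sum.distrib sum_divide_distrib[symmetric])
    also have "\<dots> \<le> 1" using s1 s2 by simp
    finally show ?thesis .
  qed
  have "nuc_norm A = (\<Sum>i<n. \<Sum>j<r. S $$ (j,j) * (c i $ j * y i $ j))"
    using q(3) trm unfolding a_def by simp
  also have "\<dots> = (\<Sum>j<r. S $$ (j,j) * (\<Sum>i<n. c i $ j * y i $ j))"
    by (subst sum.swap) (simp add: sum_distrib_left)
  also have "\<dots> \<le> (\<Sum>j<r. S $$ (j,j) * 1)"
    by (rule sum_mono, rule mult_left_mono) (use cy Sp in auto)
  finally show ?thesis unfolding A_def by simp
qed

lemma frob_inner_pair: "A \<in> carrier_mat n m \<Longrightarrow>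
  frob_inner A B = (\<Sum>p\<in>{..<n}\<times>{..<m}. A $$ p * B $$ p)"
  unfolding frob_inner_def by (simp add: sum.cartesian_product)

lemma frob_inner_comm: "A \<in> carrier_mat n m \<Longrightarrow> B \<in> carrier_mat n m \<Longrightarrow> frob_inner A B = frob_inner B A"
  unfolding frob_inner_def by (simp add: mult.commute)

lemma frob_inner_add_right: "A \<in> carrier_mat n m \<Longrightarrow> B \<in> carrier_mat n m \<Longrightarrow> C \<in> carrier_mat n m \<Longrightarrow>
  frob_inner A (B + C) = frob_inner A B + frob_inner A C"
  unfolding frob_inner_def by (simp add: distrib_left sum.distrib)

lemma frob_inner_add_left: "A \<in> carrier_mat n m \<Longrightarrow> B \<in> carrier_mat n m \<Longrightarrow> C \<in> carrier_mat n m \<Longrightarrow>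
  frob_inner (B + C) A = frob_inner B A + frob_inner C A"
  unfolding frob_inner_def by (simp add: distrib_right sum.distrib)

lemma frob_inner_minus_right: "A \<in> carrier_mat n m \<Longrightarrow> B \<in> carrier_mat n m \<Longrightarrow> C \<in> carrier_mat n m \<Longrightarrow>
  frob_inner A (B - C) = frob_inner A B - frob_inner A C"
  unfolding frob_inner_def by (simp add: right_diff_distrib sum_subtractf)

lemma frob_inner_minus_left: "A \<in> carrier_mat n m \<Longrightarrow> B \<in> carrier_mat n m \<Longrightarrow> C \<in> carrier_mat n m \<Longrightarrow>
  frob_inner (B - C) A = frob_inner B A - frob_inner C A"
  unfolding frob_inner_def by (simp add: left_diff_distrib sum_subtractf)

lemma frob_inner_smult_right: "A \<in> carrier_mat n m \<Longrightarrow> B \<in> carrier_mat n m \<Longrightarrow>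
  frob_inner A (c \<cdot>\<^sub>m B) = c * frob_inner A B"
  unfolding frob_inner_def by (simp add: sum_distrib_left mult_ac)

lemma frob_inner_smult_left: "A \<in> carrier_mat n m \<Longrightarrow> B \<in> carrier_mat n m \<Longrightarrow>
  frob_inner (c \<cdot>\<^sub>m B) A = c * frob_inner B A"
  unfolding frob_inner_def by (simp add: sum_distrib_left mult_ac)

lemma frob_inner_zero_right: "A \<in> carrier_mat n m \<Longrightarrow> frob_inner A (0\<^sub>m n m) = 0"
  unfolding frob_inner_def by simp

lemma frob_inner_zero_left: "frob_inner (0\<^sub>m n m) A = 0"
  unfolding frob_inner_def by simp

lemma frob_inner_mult_right:
  assumes A: "A \<in> carrier_mat n m" and C: "C \<in> carrier_mat n k" and D: "D \<in> carrier_mat k m"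
  shows "frob_inner A (C * D) = frob_inner (transpose_mat C * A) D"
proof -
  have "frob_inner A (C * D) = (\<Sum>i<n. \<Sum>j<m. A $$ (i,j) * (\<Sum>l<k. C $$ (i,l) * D $$ (l,j)))"
    unfolding frob_inner_def using A C D by (simp add: row_sprod)
  also have "\<dots> = (\<Sum>i<n. \<Sum>j<m. \<Sum>l<k. A $$ (i,j) * C $$ (i,l) * D $$ (l,j))"
    by (simp add: sum_distrib_left mult_ac)
  also have "\<dots> = (\<Sum>j<m. \<Sum>i<n. \<Sum>l<k. A $$ (i,j) * C $$ (i,l) * D $$ (l,j))" by (rule sum.swap)
  also have "\<dots> = (\<Sum>j<m. \<Sum>l<k. \<Sum>i<n. A $$ (i,j) * C $$ (i,l) * D $$ (l,j))"
    by (rule sum.cong[OF refl], rule sum.swap)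
  also have "\<dots> = (\<Sum>l<k. \<Sum>j<m. \<Sum>i<n. A $$ (i,j) * C $$ (i,l) * D $$ (l,j))" by (rule sum.swap)
  also have "\<dots> = (\<Sum>l<k. \<Sum>j<m. (\<Sum>i<n. C $$ (i,l) * A $$ (i,j)) * D $$ (l,j))"
    by (simp add: sum_distrib_left sum_distrib_right mult_ac)
  also have "\<dots> = frob_inner (transpose_mat C * A) D"
    unfolding frob_inner_def using A C D by (simp add: row_sprod col_sprod)
  finally show ?thesis .
qed

lemma frob_inner_mult_right2:
  assumes A: "A \<in> carrier_mat n m" and C: "C \<in> carrier_mat n k" and D: "D \<in> carrier_mat k m"
  shows "frob_inner A (C * D) = frob_inner (A * transpose_mat D) C"
proof -
  have "frob_inner A (C * D) = (\<Sum>i<n. \<Sum>j<m. A $$ (i,j) * (\<Sum>l<k. C $$ (i,l) * D $$ (l,j)))"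
    unfolding frob_inner_def using A C D by (simp add: row_sprod)
  also have "\<dots> = (\<Sum>i<n. \<Sum>j<m. \<Sum>l<k. A $$ (i,j) * C $$ (i,l) * D $$ (l,j))"
    by (simp add: sum_distrib_left mult_ac)
  also have "\<dots> = (\<Sum>i<n. \<Sum>l<k. \<Sum>j<m. A $$ (i,j) * C $$ (i,l) * D $$ (l,j))"
    by (rule sum.cong[OF refl], rule sum.swap)
  also have "\<dots> = (\<Sum>i<n. \<Sum>l<k. (\<Sum>j<m. A $$ (i,j) * D $$ (l,j)) * C $$ (i,l))"
    by (simp add: sum_distrib_left sum_distrib_right mult_ac)
  also have "\<dots> = frob_inner (A * transpose_mat D) C"
    unfolding frob_inner_def using A C D by (simp add: row_sprod col_sprod)
  finally show ?thesis .
qed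

lemma frob_inner_self_ge0: "frob_inner A A \<ge> 0"
  unfolding frob_inner_def by (intro sum_nonneg) simp

lemma frob_norm_ge0: "frob_norm A \<ge> 0" unfolding frob_norm_def using frob_inner_self_ge0 by simp

lemma frob_norm_sq: "(frob_norm A)^2 = frob_inner A A"
  unfolding frob_norm_def using frob_inner_self_ge0 by simp

lemma frob_inner_self_0:
  assumes A: "A \<in> carrier_mat n m" and z: "frob_inner A A = 0"
  shows "A = 0\<^sub>m n m"
proof (rule eq_matI)
  fix i j assume "i < dim_row (0\<^sub>m n m)" "j < dim_col (0\<^sub>m n m)"
  hence i: "i < n" and j: "j < m" by auto
  have "(\<Sum>p\<in>{..<n}\<times>{..<m}. A $$ p * A $$ p) = 0" using z frob_inner_pair[OF A] by simp
  hence "\<forall>p\<in>{..<n}\<times>{..<m}. A $$ p * A $$ p = 0" by (subst (asm) sum_nonneg_eq_0_iff) auto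
  hence "A $$ (i,j) * A $$ (i,j) = 0" using i j by auto
  thus "A $$ (i,j) = 0\<^sub>m n m $$ (i,j)" using i j by simp
qed (use A in auto)

lemma frob_norm_0: "A \<in> carrier_mat n m \<Longrightarrow> frob_norm A = 0 \<Longrightarrow> A = 0\<^sub>m n m"
  using frob_inner_self_0 unfolding frob_norm_def by (metis frob_inner_self_ge0 real_sqrt_eq_zero_cancel)

lemma frob_cs:
  assumes A: "A \<in> carrier_mat n m" and B: "B \<in> carrier_mat n m"
  shows "frob_inner A B \<le> frob_norm A * frob_norm B"
proof -
  have "frob_inner A B = (\<Sum>p\<in>{..<n}\<times>{..<m}. A $$ p * B $$ p)" using frob_inner_pair[OF A] .
  also have "\<dots> \<le> sqrt (\<Sum>p\<in>{..<n}\<times>{..<m}. (A $$ p)^2) * sqrt (\<Sum>p\<in>{..<n}\<times>{..<m}. (B $$ p)^2)"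
    by (rule cs_sum) auto
  also have "\<dots> = frob_norm A * frob_norm B" unfolding frob_norm_def
    using frob_inner_pair[OF A, of A] frob_inner_pair[OF B, of B] by (simp add: power2_eq_square)
  finally show ?thesis .
qed

lemma frob_norm_add:
  assumes A: "A \<in> carrier_mat n m" and B: "B \<in> carrier_mat n m"
  shows "frob_norm (A + B) \<le> frob_norm A + frob_norm B"
proof -
  have "(frob_norm (A + B))^2 = frob_inner A A + 2 * frob_inner A B + frob_inner B B"
    unfolding frob_norm_sq using A B
    by (simp add: frob_inner_add_left[of _ n m] frob_inner_add_right[of _ n m] frob_inner_comm[of B n m A])
  also have "\<dots> \<le> (frob_norm A)^2 + 2 * (frob_norm A * frob_norm B) + (frob_norm B)^2"
    using frob_cs[OF A B] by (simp add: frob_norm_sq)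
  also have "\<dots> = (frob_norm A + frob_norm B)^2" by (simp add: power2_eq_square algebra_simps)
  finally show ?thesis using frob_norm_ge0 by (meson power2_le_imp_le add_nonneg_nonneg)
qed

lemma frob_norm_smult: assumes A: "A \<in> carrier_mat n m" shows "frob_norm (c \<cdot>\<^sub>m A) = \<bar>c\<bar> * frob_norm A"
proof -
  have "frob_inner (c \<cdot>\<^sub>m A) (c \<cdot>\<^sub>m A) = c^2 * frob_inner A A"
    using frob_inner_smult_left[of _ n m] frob_inner_smult_right[of _ n m] A
    by (simp add: power2_eq_square)
  thus ?thesis unfolding frob_norm_def by (simp add: real_sqrt_mult)
qed

lemma frob_norm_uminus: "A \<in> carrier_mat n m \<Longrightarrow> frob_norm (- A) = frob_norm A"
  unfolding frob_norm_def frob_inner_def by simp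

lemma frob_norm_minus:
  assumes A: "A \<in> carrier_mat n m" and B: "B \<in> carrier_mat n m"
  shows "frob_norm (A - B) \<le> frob_norm A + frob_norm B"
proof -
  have "A - B = A + (- B)" using A B by auto
  thus ?thesis using frob_norm_add[of A n m "- B"] A B frob_norm_uminus[OF B] by auto
qed

lemma col_hcat:
  assumes G: "G \<in> carrier_mat n p" and U: "U \<in> carrier_mat n q" and k: "k < p + q"
  shows "col (hcat G U) k = (if k < p then col G k else col U (k - p))"
  using G U k unfolding hcat_def by (intro eq_vecI) auto

lemma hcat_carrier: "G \<in> carrier_mat n p \<Longrightarrow> U \<in> carrier_mat n q \<Longrightarrow> hcat G U \<in> carrier_mat n (p + q)"
  unfolding hcat_def by auto

lemma hcat_index: "G \<in> carrier_mat n p \<Longrightarrow> U \<in> carrier_mat n q \<Longrightarrow> i < n \<Longrightarrow> k < p + q \<Longrightarrow>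
  hcat G U $$ (i,k) = (if k < p then G $$ (i,k) else U $$ (i, k - p))"
  unfolding hcat_def by auto

lemma hcat_gram:
  assumes G: "G \<in> carrier_mat n p" and U: "U \<in> carrier_mat n q"
    and GG: "transpose_mat G * G = 1\<^sub>m p" and UU: "transpose_mat U * U = 1\<^sub>m q"
    and GU: "transpose_mat G * U = 0\<^sub>m p q"
  shows "transpose_mat (hcat G U) * hcat G U = 1\<^sub>m (p + q)"
proof (rule eq_matI)
  have H: "hcat G U \<in> carrier_mat n (p+q)" using hcat_carrier[OF G U] .
  fix a b assume "a < dim_row (1\<^sub>m (p + q))" "b < dim_col (1\<^sub>m (p + q))"
  hence a: "a < p + q" and b: "b < p + q" by auto
  have e: "(transpose_mat (hcat G U) * hcat G U) $$ (a,b) = col (hcat G U) a \<bullet> col (hcat G U) b"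
    using H a b by simp
  have GGe: "col G i \<bullet> col G j = (if i = j then 1 else 0)" if "i < p" "j < p" for i j
    using arg_cong[OF GG, of "\<lambda>M. M $$ (i,j)"] G that by simp
  have UUe: "col U i \<bullet> col U j = (if i = j then 1 else 0)" if "i < q" "j < q" for i j
    using arg_cong[OF UU, of "\<lambda>M. M $$ (i,j)"] U that by simp
  have GUe: "col G i \<bullet> col U j = 0" if "i < p" "j < q" for i j
    using arg_cong[OF GU, of "\<lambda>M. M $$ (i,j)"] G U that by simp
  have UGe: "col U j \<bullet> col G i = 0" if "i < p" "j < q" for i j
  proof -
    have "col U j \<in> carrier_vec n" "col G i \<in> carrier_vec n" using G U by (auto intro: carrier_vecI)
    thus ?thesis using GUe[OF that] comm_scalar_prod[of "col U j" n "col G i"] by auto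
  qed
  show "(transpose_mat (hcat G U) * hcat G U) $$ (a,b) = 1\<^sub>m (p + q) $$ (a,b)"
    unfolding e col_hcat[OF G U a] col_hcat[OF G U b]
    using a b GGe UUe GUe UGe by auto
qed (use hcat_carrier[OF G U] in auto)

definition selm :: "nat \<Rightarrow> nat \<Rightarrow> nat \<Rightarrow> real mat" where
  "selm N k off = mat N k (\<lambda>(i,j). if i = j + off then 1 else 0)"

lemma hcat_sel:
  assumes G: "G \<in> carrier_mat n p" and U: "U \<in> carrier_mat n q"
  shows "G = hcat G U * selm (p+q) p 0" "U = hcat G U * selm (p+q) q p"
proof -
  have H: "hcat G U \<in> carrier_mat n (p+q)" using hcat_carrier[OF G U] .
  show "G = hcat G U * selm (p+q) p 0"
  proof (rule eq_matI)
    fix i j assume "i < dim_row (hcat G U * selm (p+q) p 0)" "j < dim_col (hcat G U * selm (p+q) p 0)"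
    hence i: "i < n" and j: "j < p" using H by (auto simp: selm_def)
    have "(hcat G U * selm (p+q) p 0) $$ (i,j) = (\<Sum>k<p+q. hcat G U $$ (i,k) * selm (p+q) p 0 $$ (k,j))"
      using H i j by (simp add: row_sprod selm_def)
    also have "\<dots> = hcat G U $$ (i,j)"
    proof -
      have "(\<Sum>k\<in>{..<p+q}-{j}. hcat G U $$ (i,k) * selm (p+q) p 0 $$ (k,j)) = 0"
        by (rule sum.neutral) (use j in \<open>auto simp: selm_def\<close>)
      thus ?thesis by (subst sum.remove[of _ j]) (use j in \<open>auto simp: selm_def\<close>)
    qed
    also have "\<dots> = G $$ (i,j)" using hcat_index[OF G U i] j by simp
    finally show "G $$ (i,j) = (hcat G U * selm (p+q) p 0) $$ (i,j)" by simp
  qed (use G H in \<open>auto simp: selm_def\<close>)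
  show "U = hcat G U * selm (p+q) q p"
  proof (rule eq_matI)
    fix i j assume "i < dim_row (hcat G U * selm (p+q) q p)" "j < dim_col (hcat G U * selm (p+q) q p)"
    hence i: "i < n" and j: "j < q" using H by (auto simp: selm_def)
    have "(hcat G U * selm (p+q) q p) $$ (i,j) = (\<Sum>k<p+q. hcat G U $$ (i,k) * selm (p+q) q p $$ (k,j))"
      using H i j by (simp add: row_sprod selm_def)
    also have "\<dots> = hcat G U $$ (i,j+p)"
    proof -
      have "(\<Sum>k\<in>{..<p+q}-{j+p}. hcat G U $$ (i,k) * selm (p+q) q p $$ (k,j)) = 0"
        by (rule sum.neutral) (use j in \<open>auto simp: selm_def\<close>)
      thus ?thesis by (subst sum.remove[of _ "j+p"]) (use j in \<open>auto simp: selm_def\<close>)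
    qed
    also have "\<dots> = U $$ (i,j)" using hcat_index[OF G U i, of "j+p"] j by simp
    finally show "U $$ (i,j) = (hcat G U * selm (p+q) q p) $$ (i,j)" by simp
  qed (use U H in \<open>auto simp: selm_def\<close>)
qed

lemma selm_carrier[simp]: "selm N k off \<in> carrier_mat N k" unfolding selm_def by auto

lemma mat_lin1: "(a::real mat) \<in> carrier_mat n m \<Longrightarrow> b \<in> carrier_mat n m \<Longrightarrow> c \<in> carrier_mat n m \<Longrightarrow>
  a - ((a - b) - c) = b + c"
  by (intro eq_matI) auto

lemma one_minus_mult: "(A::real mat) \<in> carrier_mat n m \<Longrightarrow> B \<in> carrier_mat n n \<Longrightarrow>
  (1\<^sub>m n - B) * A = A - B * A"
  by (subst minus_mult_distrib_mat[of _ n n]) auto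

lemma mult_one_minus: "(A::real mat) \<in> carrier_mat n m \<Longrightarrow> B \<in> carrier_mat m m \<Longrightarrow>
  A * (1\<^sub>m m - B) = A - A * B"
  by (subst mult_minus_distrib_mat[of _ n m]) auto

lemma orth_proj_facts:
  fixes H :: "real mat"
  assumes H: "H \<in> carrier_mat n p" and HH: "transpose_mat H * H = 1\<^sub>m p"
  shows "transpose_mat H * (1\<^sub>m n - H * transpose_mat H) = 0\<^sub>m p n"
        "(1\<^sub>m n - H * transpose_mat H) * H = 0\<^sub>m n p"
proof -
  have "transpose_mat H * (1\<^sub>m n - H * transpose_mat H) = transpose_mat H - transpose_mat H * (H * transpose_mat H)"
    by (rule mult_one_minus) (use H in auto)
  also have "transpose_mat H * (H * transpose_mat H) = (transpose_mat H * H) * transpose_mat H"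
    by (rule assoc_mult_mat[symmetric]) (use H in auto)
  also have "\<dots> = transpose_mat H" using HH H by simp
  finally show "transpose_mat H * (1\<^sub>m n - H * transpose_mat H) = 0\<^sub>m p n"
    using H by (intro eq_matI) auto
  have "(1\<^sub>m n - H * transpose_mat H) * H = H - (H * transpose_mat H) * H"
    by (rule one_minus_mult) (use H in auto)
  also have "(H * transpose_mat H) * H = H * (transpose_mat H * H)"
    by (rule assoc_mult_mat) (use H in auto)
  also have "\<dots> = H" using HH H by simp
  finally show "(1\<^sub>m n - H * transpose_mat H) * H = 0\<^sub>m n p"
    using H by (intro eq_matI) auto
qed

lemma perp_PiS:
  fixes H V Z :: "real mat"
  assumes H: "H \<in> carrier_mat n1 p" and V: "V \<in> carrier_mat n2 q"
    and Z: "Z \<in> carrier_mat n1 n2" and HZ: "transpose_mat H * Z = 0\<^sub>m p n2" and ZV: "Z * V = 0\<^sub>m n1 q"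
    and Y1: "Y1 \<in> carrier_mat n2 p" and Y2: "Y2 \<in> carrier_mat n1 q"
  shows "frob_inner Z (H * transpose_mat Y1 + Y2 * transpose_mat V) = 0"
proof -
  have "frob_inner Z (H * transpose_mat Y1) = frob_inner (transpose_mat H * Z) (transpose_mat Y1)"
    by (rule frob_inner_mult_right) (use Z H Y1 in auto)
  also have "\<dots> = 0" using HZ frob_inner_zero_left by simp
  finally have 1: "frob_inner Z (H * transpose_mat Y1) = 0" .
  have "frob_inner Z (Y2 * transpose_mat V) = frob_inner (Z * transpose_mat (transpose_mat V)) Y2"
    by (rule frob_inner_mult_right2) (use Z Y2 V in auto)
  also have "\<dots> = 0" using ZV frob_inner_zero_left by simp
  finally have 2: "frob_inner Z (Y2 * transpose_mat V) = 0" .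
  show ?thesis using 1 2 Z H V Y1 Y2 by (subst frob_inner_add_right[of _ n1 n2]) auto
qed

lemma proj_formula:
  fixes H V X :: "real mat"
  assumes H: "H \<in> carrier_mat n1 p" and HH: "transpose_mat H * H = 1\<^sub>m p"
    and V: "V \<in> carrier_mat n2 q" and VV: "transpose_mat V * V = 1\<^sub>m q"
    and PiS: "PiS = {H * transpose_mat Y1 + Y2 * transpose_mat V | Y1 Y2.
                     Y1 \<in> carrier_mat n2 p \<and> Y2 \<in> carrier_mat n1 q}"
    and X: "X \<in> carrier_mat n1 n2"
  shows "proj_onto PiS X = X - (1\<^sub>m n1 - H * transpose_mat H) * X * (1\<^sub>m n2 - V * transpose_mat V)"
    "X - (1\<^sub>m n1 - H * transpose_mat H) * X * (1\<^sub>m n2 - V * transpose_mat V) \<in> PiS"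
    "\<forall>Z\<in>PiS. frob_inner ((1\<^sub>m n1 - H * transpose_mat H) * X * (1\<^sub>m n2 - V * transpose_mat V)) Z = 0"
proof -
  define R where "R = 1\<^sub>m n1 - H * transpose_mat H"
  define Q where "Q = 1\<^sub>m n2 - V * transpose_mat V"
  have R: "R \<in> carrier_mat n1 n1" unfolding R_def using H by auto
  have Q: "Q \<in> carrier_mat n2 n2" unfolding Q_def using V by auto
  have HR: "transpose_mat H * R = 0\<^sub>m p n1" unfolding R_def using orth_proj_facts[OF H HH] by simp
  have QV: "Q * V = 0\<^sub>m n2 q" unfolding Q_def using orth_proj_facts[OF V VV] by simp
  define K where "K = R * X * Q"
  have K: "K \<in> carrier_mat n1 n2" unfolding K_def using R X Q by auto
  have HK: "transpose_mat H * K = 0\<^sub>m p n2"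
  proof -
    have "transpose_mat H * K = (transpose_mat H * (R * X)) * Q" unfolding K_def
      by (rule assoc_mult_mat[symmetric]) (use H R X Q in auto)
    also have "transpose_mat H * (R * X) = (transpose_mat H * R) * X"
      by (rule assoc_mult_mat[symmetric]) (use H R X Q in auto)
    finally have "transpose_mat H * K = (transpose_mat H * R) * X * Q" .
    thus ?thesis using HR X Q by simp
  qed
  have KV: "K * V = 0\<^sub>m n1 q"
  proof -
    have "K * V = (R * X) * (Q * V)" unfolding K_def by (rule assoc_mult_mat) (use R X Q V in auto)
    thus ?thesis using QV R X by simp
  qed
  have orth: "\<forall>Z\<in>PiS. frob_inner K Z = 0"
    unfolding PiS using perp_PiS[OF H V K HK KV] by blast
  have mem: "X - K \<in> PiS"
  proof -
    have "R * X = X - (H * transpose_mat H) * X"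
      unfolding R_def by (rule one_minus_mult[OF X]) (use H in auto)
    also have "(H * transpose_mat H) * X = H * (transpose_mat H * X)"
      by (rule assoc_mult_mat) (use H X in auto)
    finally have RX: "R * X = X - H * (transpose_mat H * X)" .
    have "K = R * X - (R * X) * (V * transpose_mat V)"
      unfolding K_def Q_def by (rule mult_one_minus) (use R X V in auto)
    also have "(R * X) * (V * transpose_mat V) = (R * X * V) * transpose_mat V"
      by (rule assoc_mult_mat[symmetric]) (use R X V in auto)
    finally have KQ: "K = R * X - (R * X * V) * transpose_mat V" .
    have "X - K = H * (transpose_mat H * X) + (R * X * V) * transpose_mat V"
      unfolding KQ RX by (rule mat_lin1) (use H X V R in auto)
    also have "transpose_mat H * X = transpose_mat (transpose_mat X * H)"
      using H X by (simp add: transpose_mult[of _ n2 n1 _ p])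
    finally have "X - K = H * transpose_mat (transpose_mat X * H) + (R * X * V) * transpose_mat V" .
    moreover have "transpose_mat X * H \<in> carrier_mat n2 p" "R * X * V \<in> carrier_mat n1 q" using X H R V by auto
    ultimately show ?thesis unfolding PiS by blast
  qed
  have diffmem: "A - B \<in> PiS" if Ain: "A \<in> PiS" and Bin: "B \<in> PiS" for A B
  proof -
    obtain Y1 Y2 where A: "A = H * transpose_mat Y1 + Y2 * transpose_mat V" "Y1 \<in> carrier_mat n2 p" "Y2 \<in> carrier_mat n1 q"
      using Ain unfolding PiS by blast
    obtain Z1 Z2 where B: "B = H * transpose_mat Z1 + Z2 * transpose_mat V" "Z1 \<in> carrier_mat n2 p" "Z2 \<in> carrier_mat n1 q"
      using Bin unfolding PiS by blast
    have "A - B = H * transpose_mat (Y1 - Z1) + (Y2 - Z2) * transpose_mat V"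
    proof -
      have "H * transpose_mat (Y1 - Z1) = H * transpose_mat Y1 - H * transpose_mat Z1"
        using A B H by (simp add: transpose_minus mult_minus_distrib_mat[of _ n1 p])
      moreover have "(Y2 - Z2) * transpose_mat V = Y2 * transpose_mat V - Z2 * transpose_mat V"
        using A B V by (simp add: minus_mult_distrib_mat[of _ n1 q])
      ultimately show ?thesis using A B H V by (intro eq_matI) auto
    qed
    moreover have "Y1 - Z1 \<in> carrier_mat n2 p" "Y2 - Z2 \<in> carrier_mat n1 q" using A B by auto
    ultimately show ?thesis unfolding PiS by blast
  qed
  have carrPiS: "A \<in> carrier_mat n1 n2" if "A \<in> PiS" for A
    using that H V unfolding PiS by auto
  have "proj_onto PiS X = X - K"
    unfolding proj_onto_def
  proof (rule the_equality)
    show "X - K \<in> PiS \<and> (\<forall>Z\<in>PiS. frob_inner (X - (X - K)) Z = 0)"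
    proof
      show "X - K \<in> PiS" by (rule mem)
      have "X - (X - K) = K" using X K by (intro eq_matI) auto
      thus "\<forall>Z\<in>PiS. frob_inner (X - (X - K)) Z = 0" using orth by simp
    qed
    fix Y assume Y: "Y \<in> PiS \<and> (\<forall>Z\<in>PiS. frob_inner (X - Y) Z = 0)"
    have Yc: "Y \<in> carrier_mat n1 n2" using Y carrPiS by auto
    have d: "Y - (X - K) \<in> PiS" using diffmem Y mem by auto
    have dc: "Y - (X - K) \<in> carrier_mat n1 n2" using Yc X K by auto
    have XY: "X - Y \<in> carrier_mat n1 n2" using Yc X by auto
    have "frob_inner (X - Y) (Y - (X - K)) = 0" using Y d by auto
    moreover have "frob_inner K (Y - (X - K)) = 0" using orth d by auto
    moreover have "frob_inner (K - (X - Y)) (Y - (X - K)) = frob_inner K (Y - (X - K)) - frob_inner (X - Y) (Y - (X - K))"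
      by (rule frob_inner_minus_left[OF dc K XY])
    ultimately have "frob_inner (K - (X - Y)) (Y - (X - K)) = 0" by simp
    moreover have "K - (X - Y) = Y - (X - K)" using K X Yc by (intro eq_matI) auto
    ultimately have "frob_inner (Y - (X - K)) (Y - (X - K)) = 0" by simp
    hence "Y - (X - K) = 0\<^sub>m n1 n2" by (rule frob_inner_self_0[OF dc])
    hence "Y = Y - (Y - (X - K))" using Yc by (intro eq_matI) auto
    also have "\<dots> = X - K" using Yc X K by (intro eq_matI) auto
    finally show "Y = X - K" .
  qed
  thus "proj_onto PiS X = X - (1\<^sub>m n1 - H * transpose_mat H) * X * (1\<^sub>m n2 - V * transpose_mat V)"
    unfolding K_def R_def Q_def .
  show "X - (1\<^sub>m n1 - H * transpose_mat H) * X * (1\<^sub>m n2 - V * transpose_mat V) \<in> PiS"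
    using mem unfolding K_def R_def Q_def .
  show "\<forall>Z\<in>PiS. frob_inner ((1\<^sub>m n1 - H * transpose_mat H) * X * (1\<^sub>m n2 - V * transpose_mat V)) Z = 0"
    using orth unfolding K_def R_def Q_def .
qed

lemma vnorm_mult_le:
  fixes A :: "real mat"
  assumes A: "A \<in> carrier_mat m n" and v: "v \<in> carrier_vec n"
  shows "vnorm (A *\<^sub>v v) \<le> frob_norm A * vnorm v"
proof -
  have "(vnorm (A *\<^sub>v v))^2 = (\<Sum>i<m. (\<Sum>k<n. A $$ (i,k) * v $ k)^2)"
    unfolding vnorm_sq using A v by (simp add: sprod_eq[of _ m] row_sprod power2_eq_square)
  also have "\<dots> \<le> (\<Sum>i<m. (\<Sum>k<n. (A $$ (i,k))^2) * (\<Sum>k<n. (v $ k)^2))"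
    by (rule sum_mono, rule cs_sum_sq) auto
  also have "\<dots> = (frob_norm A * vnorm v)^2"
    unfolding power_mult_distrib frob_norm_sq vnorm_sq frob_inner_def using A v
    by (simp add: sum_distrib_right sprod_eq[of _ n] power2_eq_square)
  finally show ?thesis using frob_norm_ge0 vnorm_ge0
    by (meson mult_nonneg_nonneg power2_le_imp_le)
qed

lemma vnorm_smult: assumes v: "v \<in> carrier_vec n" shows "vnorm (a \<cdot>\<^sub>v v) = \<bar>a\<bar> * vnorm v"
proof -
  have "(a \<cdot>\<^sub>v v) \<bullet> (a \<cdot>\<^sub>v v) = a^2 * (v \<bullet> v)" using v
    by (simp add: smult_scalar_prod_distrib[of _ n] scalar_prod_smult_distrib[of _ n] power2_eq_square)
  thus ?thesis unfolding vnorm_def by (simp add: real_sqrt_mult)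
qed

lemma spec_bound:
  fixes W :: "real mat"
  assumes W: "W \<in> carrier_mat n1 n2" and sn: "spec_norm W \<le> c"
  shows "\<forall>v\<in>carrier_vec n2. vnorm (W *\<^sub>v v) \<le> c * vnorm v"
proof
  define S where "S = {vnorm (W *\<^sub>v v) | v. v \<in> carrier_vec (dim_col W) \<and> vnorm v = 1}"
  have bdd: "bdd_above S" unfolding S_def
    by (rule bdd_aboveI[of _ "frob_norm W"]) (use vnorm_mult_le[OF W] W in force)
  have unit: "vnorm (W *\<^sub>v u) \<le> c" if "u \<in> carrier_vec n2" "vnorm u = 1" for u
  proof -
    have "vnorm (W *\<^sub>v u) \<in> S" unfolding S_def using that W by auto
    hence "vnorm (W *\<^sub>v u) \<le> Sup S" using bdd by (rule cSup_upper)
    thus ?thesis using sn unfolding spec_norm_def S_def by simp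
  qed
  fix v :: "real vec" assume v: "v \<in> carrier_vec n2"
  show "vnorm (W *\<^sub>v v) \<le> c * vnorm v"
  proof (cases "v = 0\<^sub>v n2")
    case True
    have "W *\<^sub>v v = 0\<^sub>v n1" using True W by (intro eq_vecI) auto
    thus ?thesis using True by (simp add: vnorm_def)
  next
    case False
    have pos: "vnorm v > 0" unfolding vnorm_def using sprod_self_pos[OF v False] by simp
    define u where "u = (1 / vnorm v) \<cdot>\<^sub>v v"
    have u: "u \<in> carrier_vec n2" "vnorm u = 1" unfolding u_def using v pos by (auto simp: vnorm_smult[OF v])
    have "W *\<^sub>v u = (1 / vnorm v) \<cdot>\<^sub>v (W *\<^sub>v v)" unfolding u_def using W v by (simp add: mult_mat_vec)
    hence "vnorm (W *\<^sub>v u) = vnorm (W *\<^sub>v v) / vnorm v" using pos W v by (simp add: vnorm_smult[of _ n1])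
    with unit[OF u] pos show ?thesis by (simp add: divide_le_eq mult.commute)
  qed
qed

lemma op_norm_bound:
  fixes T :: "real mat \<Rightarrow> real mat"
  assumes on: "op_norm n1 n2 T \<le> c"
    and hom: "\<And>X a. X \<in> carrier_mat n1 n2 \<Longrightarrow> T (a \<cdot>\<^sub>m X) = a \<cdot>\<^sub>m T X"
    and Tc: "\<And>X. X \<in> carrier_mat n1 n2 \<Longrightarrow> T X \<in> carrier_mat n1 n2"
    and bnd: "\<And>X. X \<in> carrier_mat n1 n2 \<Longrightarrow> frob_norm (T X) \<le> C * frob_norm X"
    and X: "X \<in> carrier_mat n1 n2"
  shows "frob_norm (T X) \<le> c * frob_norm X"
proof -
  define S where "S = {frob_norm (T X) | X. X \<in> carrier_mat n1 n2 \<and> frob_norm X = 1}"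
  have bdd: "bdd_above S" unfolding S_def
    by (rule bdd_aboveI[of _ C]) (use bnd in force)
  have unit: "frob_norm (T Y) \<le> c" if "Y \<in> carrier_mat n1 n2" "frob_norm Y = 1" for Y
  proof -
    have "frob_norm (T Y) \<in> S" unfolding S_def using that by auto
    hence "frob_norm (T Y) \<le> Sup S" using bdd by (rule cSup_upper)
    thus ?thesis using on unfolding op_norm_def S_def by simp
  qed
  show ?thesis
  proof (cases "frob_norm X = 0")
    case True
    hence "X = 0\<^sub>m n1 n2" using frob_norm_0[OF X] by simp
    hence "0 \<cdot>\<^sub>m X = X" by (intro eq_matI) auto
    hence "T X = 0 \<cdot>\<^sub>m T X" using hom[OF X, of 0] by simp
    hence "frob_norm (T X) = 0" using frob_norm_smult[OF Tc[OF X], of 0] by simp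
    thus ?thesis using True by simp
  next
    case False
    have pos: "frob_norm X > 0" using False frob_norm_ge0[of X] by simp
    define Y where "Y = (1 / frob_norm X) \<cdot>\<^sub>m X"
    have Y: "Y \<in> carrier_mat n1 n2" "frob_norm Y = 1" unfolding Y_def using X pos
      by (auto simp: frob_norm_smult[OF X])
    have "T Y = (1 / frob_norm X) \<cdot>\<^sub>m T X" unfolding Y_def by (rule hom[OF X])
    hence "frob_norm (T Y) = frob_norm (T X) / frob_norm X" using pos frob_norm_smult[OF Tc[OF X]] by simp
    with unit[OF Y] pos show ?thesis by (simp add: divide_le_eq mult.commute)
  qed
qed

lemma zero_mat_mult_vec[simp]: "v \<in> carrier_vec n \<Longrightarrow> 0\<^sub>m m n *\<^sub>v v = (0\<^sub>v m :: real vec)"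
  by (intro eq_vecI) auto

lemma sprod_add_self: "a \<in> carrier_vec n \<Longrightarrow> b \<in> carrier_vec n \<Longrightarrow>
  (a + b) \<bullet> (a + b) = a \<bullet> a + 2 * (a \<bullet> b) + (b::real vec) \<bullet> b"
  by (simp add: add_scalar_prod_distrib[of _ n] scalar_prod_add_distrib[of _ n] comm_scalar_prod[of b n a])

lemma sprod_minus_self: "a \<in> carrier_vec n \<Longrightarrow> b \<in> carrier_vec n \<Longrightarrow>
  (a - b) \<bullet> (a - b) = a \<bullet> a - 2 * (a \<bullet> b) + (b::real vec) \<bullet> b"
  by (simp add: minus_scalar_prod_distrib[of _ n] scalar_prod_minus_distrib[of _ n] comm_scalar_prod[of b n a])

lemma transp_sprod: "A \<in> carrier_mat m n \<Longrightarrow> x \<in> carrier_vec n \<Longrightarrow> y \<in> carrier_vec m \<Longrightarrow>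
  (A *\<^sub>v x) \<bullet> y = x \<bullet> (transpose_mat A *\<^sub>v (y::real vec))"
  using transpose_vec_mult_scalar[of A m n x y] comm_scalar_prod[of "A *\<^sub>v x" m y]
    comm_scalar_prod[of x n "transpose_mat A *\<^sub>v y"] by auto

lemma isom_sprod:
  assumes U: "U \<in> carrier_mat m q" and UU: "transpose_mat U * U = 1\<^sub>m q" and x: "x \<in> carrier_vec q"
  shows "(U *\<^sub>v x) \<bullet> (U *\<^sub>v x) = x \<bullet> (x :: real vec)"
proof -
  have "(U *\<^sub>v x) \<bullet> (U *\<^sub>v x) = x \<bullet> (transpose_mat U *\<^sub>v (U *\<^sub>v x))"
    by (rule transp_sprod) (use U x in auto)
  also have "transpose_mat U *\<^sub>v (U *\<^sub>v x) = (transpose_mat U * U) *\<^sub>v x"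
    by (rule assoc_mult_mat_vec[symmetric]) (use U x in auto)
  finally show ?thesis using UU x by simp
qed

lemma G1:
  fixes U V Z :: "real mat"
  assumes U: "U \<in> carrier_mat n1 q" and V: "V \<in> carrier_mat n2 q" and Z: "Z \<in> carrier_mat n1 n2"
    and UU: "transpose_mat U * U = 1\<^sub>m q" and UZ: "transpose_mat U * Z = 0\<^sub>m q n2"
    and v: "v \<in> carrier_vec n2"
  shows "((U * transpose_mat V + Z) *\<^sub>v v) \<bullet> ((U * transpose_mat V + Z) *\<^sub>v v)
         = (transpose_mat V *\<^sub>v v) \<bullet> (transpose_mat V *\<^sub>v v) + (Z *\<^sub>v v) \<bullet> (Z *\<^sub>v v)"
proof -
  define x where "x = transpose_mat V *\<^sub>v v"
  have x: "x \<in> carrier_vec q" unfolding x_def using V v by auto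
  have e: "(U * transpose_mat V + Z) *\<^sub>v v = U *\<^sub>v x + Z *\<^sub>v v"
    unfolding x_def using U V Z v
    by (simp add: add_mult_distrib_mat_vec[of _ n1 n2] assoc_mult_mat_vec[of _ n1 q _ n2])
  have cross: "(U *\<^sub>v x) \<bullet> (Z *\<^sub>v v) = 0"
  proof -
    have "(U *\<^sub>v x) \<bullet> (Z *\<^sub>v v) = x \<bullet> (transpose_mat U *\<^sub>v (Z *\<^sub>v v))"
      by (rule transp_sprod) (use U x Z v in auto)
    also have "transpose_mat U *\<^sub>v (Z *\<^sub>v v) = (transpose_mat U * Z) *\<^sub>v v"
      by (rule assoc_mult_mat_vec[symmetric]) (use U Z v in auto)
    finally show ?thesis using UZ x v by simp
  qed
  show ?thesis unfolding e
    using sprod_add_self[of "U *\<^sub>v x" n1 "Z *\<^sub>v v"] U x Z v cross isom_sprod[OF U UU x]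
    unfolding x_def[symmetric] by simp
qed

lemma G2:
  fixes V :: "real mat"
  assumes V: "V \<in> carrier_mat n2 q" and VV: "transpose_mat V * V = 1\<^sub>m q" and v: "v \<in> carrier_vec n2"
  shows "(transpose_mat V *\<^sub>v v) \<bullet> (transpose_mat V *\<^sub>v v)
         + (v - V *\<^sub>v (transpose_mat V *\<^sub>v v)) \<bullet> (v - V *\<^sub>v (transpose_mat V *\<^sub>v v)) = v \<bullet> v"
proof -
  define x where "x = transpose_mat V *\<^sub>v v"
  have x: "x \<in> carrier_vec q" unfolding x_def using V v by auto
  have 1: "v \<bullet> (V *\<^sub>v x) = x \<bullet> x"
  proof -
    have "v \<bullet> (V *\<^sub>v x) = (V *\<^sub>v x) \<bullet> v" using comm_scalar_prod[of v n2 "V *\<^sub>v x"] V v x by auto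
    also have "\<dots> = x \<bullet> (transpose_mat V *\<^sub>v v)" by (rule transp_sprod) (use V x v in auto)
    finally show ?thesis unfolding x_def .
  qed
  have 2: "(V *\<^sub>v x) \<bullet> (V *\<^sub>v x) = x \<bullet> x" by (rule isom_sprod[OF V VV x])
  show ?thesis unfolding x_def[symmetric]
    using sprod_minus_self[of v n2 "V *\<^sub>v x"] V v x 1 2 by simp
qed

lemma G3:
  fixes V Z :: "real mat"
  assumes V: "V \<in> carrier_mat n2 q" and Z: "Z \<in> carrier_mat n1 n2" and ZV: "Z * V = 0\<^sub>m n1 q"
    and v: "v \<in> carrier_vec n2"
  shows "Z *\<^sub>v v = Z *\<^sub>v (v - V *\<^sub>v (transpose_mat V *\<^sub>v v))"
proof -
  have x: "transpose_mat V *\<^sub>v v \<in> carrier_vec q" using V v by auto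
  have "Z *\<^sub>v (v - V *\<^sub>v (transpose_mat V *\<^sub>v v)) = Z *\<^sub>v v - Z *\<^sub>v (V *\<^sub>v (transpose_mat V *\<^sub>v v))"
    by (rule mult_minus_distrib_mat_vec) (use Z V v x in auto)
  also have "Z *\<^sub>v (V *\<^sub>v (transpose_mat V *\<^sub>v v)) = (Z * V) *\<^sub>v (transpose_mat V *\<^sub>v v)"
    by (rule assoc_mult_mat_vec[symmetric]) (use Z V x in auto)
  also have "\<dots> = 0\<^sub>v n1" using ZV x by auto
  finally show ?thesis using Z v by auto
qed

lemma P_Omega_carrier[simp]: "X \<in> carrier_mat n m \<Longrightarrow> P_Omega Om X \<in> carrier_mat n m"
  unfolding P_Omega_def by auto

lemma P_Omega_index: "X \<in> carrier_mat n m \<Longrightarrow> i < n \<Longrightarrow> j < m \<Longrightarrow>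
  P_Omega Om X $$ (i,j) = (if (i,j) \<in> Om then X $$ (i,j) else 0)"
  unfolding P_Omega_def by auto

lemma P_Omega_smult: "X \<in> carrier_mat n m \<Longrightarrow> P_Omega Om (a \<cdot>\<^sub>m X) = a \<cdot>\<^sub>m P_Omega Om X"
  unfolding P_Omega_def by (intro eq_matI) auto

lemma P_Omega_add: "X \<in> carrier_mat n m \<Longrightarrow> Y \<in> carrier_mat n m \<Longrightarrow>
  P_Omega Om (X + Y) = P_Omega Om X + P_Omega Om Y"
  unfolding P_Omega_def by (intro eq_matI) auto

lemma P_Omega_minus: "X \<in> carrier_mat n m \<Longrightarrow> Y \<in> carrier_mat n m \<Longrightarrow>
  P_Omega Om (X - Y) = P_Omega Om X - P_Omega Om Y"
  unfolding P_Omega_def by (intro eq_matI) auto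

lemma P_Omega_norm:
  assumes X: "X \<in> carrier_mat n m" shows "frob_norm (P_Omega Om X) \<le> frob_norm X"
proof -
  have "frob_inner (P_Omega Om X) (P_Omega Om X) \<le> frob_inner X X"
    unfolding frob_inner_def using X by (auto intro!: sum_mono simp: P_Omega_def)
  thus ?thesis unfolding frob_norm_def by simp
qed

lemma frob_le_l1:
  assumes X: "X \<in> carrier_mat n m" shows "frob_norm X \<le> l1_norm X"
proof -
  define a where "a p = \<bar>X $$ p\<bar>" for p
  define P where "P = {..<n} \<times> {..<m}"
  have l1: "l1_norm X = (\<Sum>p\<in>P. a p)" unfolding l1_norm_def a_def P_def using X
    by (simp add: sum.cartesian_product)
  have fi: "frob_inner X X = (\<Sum>p\<in>P. a p * a p)" unfolding P_def a_def
    using frob_inner_pair[OF X, of X] by (simp add: abs_mult_self_eq)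
  have "(\<Sum>p\<in>P. a p * a p) \<le> (\<Sum>p\<in>P. a p * (\<Sum>q\<in>P. a q))"
    by (rule sum_mono, rule mult_left_mono) (auto simp: a_def P_def intro: member_le_sum)
  also have "\<dots> = (\<Sum>p\<in>P. a p)^2" by (simp add: sum_distrib_right[symmetric] power2_eq_square)
  finally have "frob_inner X X \<le> (l1_norm X)^2" using fi l1 by simp
  moreover have "l1_norm X \<ge> 0" unfolding l1 a_def by (simp add: sum_nonneg)
  ultimately show ?thesis unfolding frob_norm_def
    using real_sqrt_le_mono[of "frob_inner X X" "(l1_norm X)^2"] by simp
qed

lemma l1_Pc: "S \<in> carrier_mat n m \<Longrightarrow> H \<in> carrier_mat n m \<Longrightarrow>
  l1_norm (H - P_Omega (supp S) H) = (\<Sum>i<n. \<Sum>j<m. if S $$ (i,j) = 0 then \<bar>H $$ (i,j)\<bar> else 0)"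
  unfolding l1_norm_def by (intro sum.cong refl) (auto simp: P_Omega_def supp_def)

lemma l1_subgrad:
  fixes S H :: "real mat"
  assumes S: "S \<in> carrier_mat n m" and H: "H \<in> carrier_mat n m"
  shows "l1_norm (S - H) \<ge> l1_norm S - frob_inner (sgn_mat S) H + l1_norm (H - P_Omega (supp S) H)"
proof -
  have "l1_norm S - frob_inner (sgn_mat S) H + l1_norm (H - P_Omega (supp S) H)
      = (\<Sum>i<n. \<Sum>j<m. \<bar>S $$ (i,j)\<bar> - sgn (S $$ (i,j)) * H $$ (i,j) + (if S $$ (i,j) = 0 then \<bar>H $$ (i,j)\<bar> else 0))"
    unfolding l1_Pc[OF S H] unfolding l1_norm_def frob_inner_def sgn_mat_def using S H
    by (simp add: sum.distrib sum_subtractf)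
  also have "\<dots> \<le> (\<Sum>i<n. \<Sum>j<m. \<bar>S $$ (i,j) - H $$ (i,j)\<bar>)"
  proof (rule sum_mono, rule sum_mono)
    fix i j
    show "\<bar>S $$ (i,j)\<bar> - sgn (S $$ (i,j)) * H $$ (i,j) + (if S $$ (i,j) = 0 then \<bar>H $$ (i,j)\<bar> else 0)
          \<le> \<bar>S $$ (i,j) - H $$ (i,j)\<bar>"
      by (cases "S $$ (i,j) > 0"; cases "S $$ (i,j) = 0") (auto simp: sgn_if abs_if)
  qed
  also have "\<dots> = l1_norm (S - H)" unfolding l1_norm_def using S H by simp
  finally show ?thesis .
qed

lemma F_bound:
  fixes S H F :: "real mat"
  assumes S: "S \<in> carrier_mat n m" and H: "H \<in> carrier_mat n m" and F: "F \<in> carrier_mat n m"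
    and PF: "P_Omega (supp S) F = 0\<^sub>m n m" and mF: "max_norm F \<le> c"
  shows "frob_inner F H \<ge> - c * l1_norm (H - P_Omega (supp S) H)"
proof -
  have Fle: "\<bar>F $$ (i,j)\<bar> \<le> c" if "i < n" "j < m" for i j
  proof -
    have fin: "finite ({\<bar>F $$ (i,j)\<bar> | i j. i < dim_row F \<and> j < dim_col F} \<union> {0})"
    proof -
      have "{\<bar>F $$ (i,j)\<bar> | i j. i < dim_row F \<and> j < dim_col F} = (\<lambda>p. \<bar>F $$ p\<bar>) ` ({..<n} \<times> {..<m})"
        using F by auto
      thus ?thesis by simp
    qed
    have "\<bar>F $$ (i,j)\<bar> \<le> max_norm F" unfolding max_norm_def
      by (rule Max_ge[OF fin]) (use that F in auto)
    thus ?thesis using mF by simp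
  qed
  have F0: "F $$ (i,j) = 0" if "i < n" "j < m" "S $$ (i,j) \<noteq> 0" for i j
    using arg_cong[OF PF, of "\<lambda>X. X $$ (i,j)"] that S F by (simp add: P_Omega_def supp_def)
  have "- c * l1_norm (H - P_Omega (supp S) H) = (\<Sum>i<n. \<Sum>j<m. - c * (if S $$ (i,j) = 0 then \<bar>H $$ (i,j)\<bar> else 0))"
    unfolding l1_Pc[OF S H] by (simp add: sum_distrib_left)
  also have "\<dots> \<le> (\<Sum>i<n. \<Sum>j<m. F $$ (i,j) * H $$ (i,j))"
  proof (rule sum_mono, rule sum_mono)
    fix i j assume "i \<in> {..<n}" "j \<in> {..<m}"
    hence i: "i < n" and j: "j < m" by auto
    show "- c * (if S $$ (i,j) = 0 then \<bar>H $$ (i,j)\<bar> else 0) \<le> F $$ (i,j) * H $$ (i,j)"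
    proof (cases "S $$ (i,j) = 0")
      case True
      have "- (F $$ (i,j) * H $$ (i,j)) \<le> \<bar>F $$ (i,j)\<bar> * \<bar>H $$ (i,j)\<bar>" by (simp add: abs_mult[symmetric])
      also have "\<dots> \<le> c * \<bar>H $$ (i,j)\<bar>" by (rule mult_right_mono[OF Fle[OF i j]]) simp
      finally show ?thesis using True by simp
    next
      case False
      thus ?thesis using F0[OF i j] by simp
    qed
  qed
  also have "\<dots> = frob_inner F H" unfolding frob_inner_def using F by simp
  finally show ?thesis .
qed

lemma D_bound:
  fixes D H :: "real mat"
  assumes D: "D \<in> carrier_mat n m" and H: "H \<in> carrier_mat n m"
  shows "frob_inner (P_Omega Om D) H \<ge> - (frob_norm (P_Omega Om D) * frob_norm (P_Omega Om H))"
proof -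
  have "frob_inner (P_Omega Om D) H = frob_inner (P_Omega Om D) (P_Omega Om H)"
    unfolding frob_inner_def using D H by (intro sum.cong refl) (auto simp: P_Omega_def)
  moreover have "frob_inner (- P_Omega Om D) (P_Omega Om H) \<le> frob_norm (- P_Omega Om D) * frob_norm (P_Omega Om H)"
    by (rule frob_cs[of _ n m]) (use D H in auto)
  moreover have "frob_inner (- P_Omega Om D) (P_Omega Om H) = - frob_inner (P_Omega Om D) (P_Omega Om H)"
    unfolding frob_inner_def using D H by (simp add: sum_negf)
  ultimately show ?thesis using frob_norm_uminus[of "P_Omega Om D" n m] D by simp
qed

lemma smult_mat_vec: "A \<in> carrier_mat m n \<Longrightarrow> v \<in> carrier_vec n \<Longrightarrow>
  (k \<cdot>\<^sub>m A) *\<^sub>v v = k \<cdot>\<^sub>v (A *\<^sub>v (v::real vec))"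
  by (intro eq_vecI) (auto simp: row_sprod sum_distrib_left mult.assoc)

lemma transpose_smult: "transpose_mat (k \<cdot>\<^sub>m A) = k \<cdot>\<^sub>m transpose_mat (A::real mat)"
  by (intro eq_matI) auto

lemma frob_norm_transpose: "frob_norm (transpose_mat A) = frob_norm A"
proof -
  have "frob_inner (transpose_mat A) (transpose_mat A) = frob_inner A A"
    unfolding frob_inner_def by simp (rule sum.swap)
  thus ?thesis unfolding frob_norm_def by simp
qed

lemma vnorm_add: "a \<in> carrier_vec n \<Longrightarrow> b \<in> carrier_vec n \<Longrightarrow> vnorm (a + b) \<le> vnorm a + vnorm (b::real vec)"
proof -
  assume a: "a \<in> carrier_vec n" and b: "b \<in> carrier_vec n"
  have "(vnorm (a + b))^2 = a \<bullet> a + 2 * (a \<bullet> b) + b \<bullet> b" unfolding vnorm_sq using sprod_add_self[OF a b] .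
  also have "\<dots> \<le> (vnorm a)^2 + 2 * (vnorm a * vnorm b) + (vnorm b)^2"
    using vec_cs[OF a b] by (simp add: vnorm_sq)
  also have "\<dots> = (vnorm a + vnorm b)^2" by (simp add: power2_eq_square algebra_simps)
  finally show ?thesis using vnorm_ge0 by (meson power2_le_imp_le add_nonneg_nonneg)
qed

lemma RXQ_perp:
  fixes H V X :: "real mat"
  assumes H: "H \<in> carrier_mat n1 p" and HH: "transpose_mat H * H = 1\<^sub>m p"
    and V: "V \<in> carrier_mat n2 q" and VV: "transpose_mat V * V = 1\<^sub>m q"
    and X: "X \<in> carrier_mat n1 n2"
  shows "transpose_mat H * ((1\<^sub>m n1 - H * transpose_mat H) * X * (1\<^sub>m n2 - V * transpose_mat V)) = 0\<^sub>m p n2"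
    "((1\<^sub>m n1 - H * transpose_mat H) * X * (1\<^sub>m n2 - V * transpose_mat V)) * V = 0\<^sub>m n1 q"
proof -
  define R where "R = 1\<^sub>m n1 - H * transpose_mat H"
  define Q where "Q = 1\<^sub>m n2 - V * transpose_mat V"
  have R: "R \<in> carrier_mat n1 n1" unfolding R_def using H by auto
  have Q: "Q \<in> carrier_mat n2 n2" unfolding Q_def using V by auto
  have HR: "transpose_mat H * R = 0\<^sub>m p n1" unfolding R_def using orth_proj_facts[OF H HH] by simp
  have QV: "Q * V = 0\<^sub>m n2 q" unfolding Q_def using orth_proj_facts[OF V VV] by simp
  have "transpose_mat H * (R * X * Q) = (transpose_mat H * (R * X)) * Q"
    by (rule assoc_mult_mat[symmetric]) (use H R X Q in auto)
  also have "transpose_mat H * (R * X) = (transpose_mat H * R) * X"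
    by (rule assoc_mult_mat[symmetric]) (use H R X Q in auto)
  finally show "transpose_mat H * ((1\<^sub>m n1 - H * transpose_mat H) * X * (1\<^sub>m n2 - V * transpose_mat V)) = 0\<^sub>m p n2"
    unfolding R_def[symmetric] Q_def[symmetric] using HR X Q by simp
  have "(R * X * Q) * V = (R * X) * (Q * V)" by (rule assoc_mult_mat) (use R X Q V in auto)
  thus "((1\<^sub>m n1 - H * transpose_mat H) * X * (1\<^sub>m n2 - V * transpose_mat V)) * V = 0\<^sub>m n1 q"
    unfolding R_def[symmetric] Q_def[symmetric] using QV R X by simp
qed

lemma sel_perp:
  fixes H E Z :: "real mat"
  assumes H: "H \<in> carrier_mat n p" and E: "E \<in> carrier_mat p k" and Z: "Z \<in> carrier_mat n m"
    and HZ: "transpose_mat H * Z = 0\<^sub>m p m"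
  shows "transpose_mat (H * E) * Z = 0\<^sub>m k m"
proof -
  have "transpose_mat (H * E) * Z = (transpose_mat E * transpose_mat H) * Z"
    using H E by (simp add: transpose_mult[of _ n p _ k])
  also have "\<dots> = transpose_mat E * (transpose_mat H * Z)"
    by (rule assoc_mult_mat) (use H E Z in auto)
  finally show ?thesis using HZ E by simp
qed

lemma pythag:
  assumes A: "A \<in> carrier_mat n m" and B: "B \<in> carrier_mat n m" and o: "frob_inner B A = 0"
  shows "frob_norm A \<le> frob_norm (A + B)"
proof -
  have "(frob_norm (A + B))^2 = frob_inner A A + 2 * frob_inner A B + frob_inner B B"
    unfolding frob_norm_sq using A B
    by (simp add: frob_inner_add_left[of _ n m] frob_inner_add_right[of _ n m] frob_inner_comm[of B n m A])
  also have "\<dots> = (frob_norm A)^2 + frob_inner B B" using o frob_inner_comm[OF A B] by (simp add: frob_norm_sq)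
  finally have "(frob_norm A)^2 \<le> (frob_norm (A + B))^2" using frob_inner_self_ge0[of B] by simp
  thus ?thesis using frob_norm_ge0 by (meson power2_le_imp_le)
qed

lemma trace_lemma:
  fixes U S V :: "real mat"
  assumes U: "U \<in> carrier_mat n1 r" and S: "S \<in> carrier_mat r r" and V: "V \<in> carrier_mat n2 r"
    and UU: "transpose_mat U * U = 1\<^sub>m r" and VV: "transpose_mat V * V = 1\<^sub>m r"
  shows "frob_inner (U * transpose_mat V) (U * S * transpose_mat V) = (\<Sum>j<r. S $$ (j,j))"
proof -
  have "frob_inner (U * transpose_mat V) ((U * S) * transpose_mat V)
      = frob_inner ((U * transpose_mat V) * transpose_mat (transpose_mat V)) (U * S)"
    by (rule frob_inner_mult_right2) (use U S V in auto)
  also have "(U * transpose_mat V) * transpose_mat (transpose_mat V) = U * (transpose_mat V * V)"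
    by (simp, rule assoc_mult_mat) (use U V in auto)
  also have "\<dots> = U" using VV U by simp
  also have "frob_inner U (U * S) = frob_inner (transpose_mat U * U) S"
    by (rule frob_inner_mult_right) (use U S in auto)
  also have "\<dots> = frob_inner (1\<^sub>m r) S" using UU by simp
  also have "\<dots> = (\<Sum>j<r. S $$ (j,j))"
  proof -
    have "frob_inner (1\<^sub>m r) S = (\<Sum>i<r. \<Sum>j<r. (if i = j then 1 else 0) * S $$ (i,j))"
      unfolding frob_inner_def by simp
    also have "\<dots> = (\<Sum>i<r. S $$ (i,i))" by (simp add: if_distrib[of "\<lambda>x. x * _"] cong: if_cong)
    finally show ?thesis .
  qed
  finally show ?thesis .
qed

lemma P_Omega_dims[simp]: "dim_row (P_Omega Om X) = dim_row X" "dim_col (P_Omega Om X) = dim_col X"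
  unfolding P_Omega_def by auto

lemma idx_lin: "A \<in> carrier_mat n m \<Longrightarrow> B \<in> carrier_mat n m \<Longrightarrow> C \<in> carrier_mat n m \<Longrightarrow>
  D \<in> carrier_mat n m \<Longrightarrow> i < n \<Longrightarrow> j < m \<Longrightarrow>
  (A - B + (C - D)) $$ (i,j) = A $$ (i,j) - B $$ (i,j) + (C $$ (i,j) - (D::real mat) $$ (i,j))"
  by simp

lemma zero_minus_mat': "A \<in> carrier_mat n m \<Longrightarrow> 0\<^sub>m n m - A = - (A::real mat)"
  by (intro eq_matI) auto

lemma frob_inner_uminus_right: "A \<in> carrier_mat n m \<Longrightarrow> B \<in> carrier_mat n m \<Longrightarrow>
  frob_inner A (- B) = - frob_inner A B"
  unfolding frob_inner_def by (simp add: sum_negf)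

lemma mat_diff0:
  assumes e: "A - B = 0\<^sub>m n m" and A: "A \<in> carrier_mat n m" and B: "B \<in> carrier_mat n m"
  shows "A = (B::real mat)"
proof (rule eq_matI)
  fix i j assume i: "i < dim_row B" and j: "j < dim_col B"
  have "(A - B) $$ (i,j) = 0" using e i j B by simp
  thus "A $$ (i,j) = B $$ (i,j)" using i j A B by simp
qed (use A B in auto)

theorem lemma3:
  fixes n1 n2 r rG rnew :: nat and lam :: real
    and M L S G Unew Snew Vnew W F D :: "real mat"
  assumes M: "M = L + S"
    and dims: "L \<in> carrier_mat n1 n2" "S \<in> carrier_mat n1 n2"
    and rankL: "mrank L = r"
    and G: "G \<in> carrier_mat n1 rG" "basis_mat G"
    and rank_new: "mrank ((1\<^sub>m n1 - G * transpose_mat G) * L) = rnew" "rnew < r"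
    and svd: "Unew \<in> carrier_mat n1 rnew" "Snew \<in> carrier_mat rnew rnew" "Vnew \<in> carrier_mat n2 rnew"
       "basis_mat Unew" "basis_mat Vnew"
       "\<forall>i<rnew. \<forall>j<rnew. i \<noteq> j \<longrightarrow> Snew $$ (i,j) = 0"
       "\<forall>i<rnew. Snew $$ (i,i) > 0"
       "(1\<^sub>m n1 - G * transpose_mat G) * L = Unew * Snew * transpose_mat Vnew"
    and PiS: "PiS = {hcat G Unew * transpose_mat Y1 + Y2 * transpose_mat Vnew | Y1 Y2.
                     Y1 \<in> carrier_mat n2 (rG + rnew) \<and> Y2 \<in> carrier_mat n1 rnew}"
    and Omega: "\<Omega> = supp S"
    and incoh: "op_norm n1 n2 (\<lambda>X. P_Omega \<Omega> (proj_onto PiS X)) \<le> 1/4"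
    and lam: "0 < lam" "lam < 3/10"
    and WFD: "W \<in> carrier_mat n1 n2" "F \<in> carrier_mat n1 n2" "D \<in> carrier_mat n1 n2"
    and cert: "Unew * transpose_mat Vnew + W = lam \<cdot>\<^sub>m (sgn_mat S + F + P_Omega \<Omega> D)"
    and W: "proj_onto PiS W = 0\<^sub>m n1 n2" "spec_norm W \<le> 9/10"
    and F: "P_Omega \<Omega> F = 0\<^sub>m n1 n2" "max_norm F \<le> 9/10"
    and D: "frob_norm (P_Omega \<Omega> D) \<le> 1/4"
  shows "(let Lnew = (1\<^sub>m n1 - G * transpose_mat G) * L; X0 = transpose_mat L * G;
              feas = (\<lambda>(L', S', X'). L' \<in> carrier_mat n1 n2 \<and> S' \<in> carrier_mat n1 n2
                          \<and> X' \<in> carrier_mat n2 rG \<and> L' + G * transpose_mat X' + S' = M);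
              obj = (\<lambda>(L', S', X'). nuc_norm L' + lam * l1_norm S')
          in feas (Lnew, S, X0) \<and>
             (\<forall>L' S' X'. feas (L', S', X') \<longrightarrow>
                 obj (Lnew, S, X0) \<le> obj (L', S', X') \<and>
                 (obj (L', S', X') \<le> obj (Lnew, S, X0) \<longrightarrow> (L', S', X') = (Lnew, S, X0))))"
proof -
  define Lnew where "Lnew = (1\<^sub>m n1 - G * transpose_mat G) * L"
  define X0 where "X0 = transpose_mat L * G"
  note Gc = G(1)
  have Lc: "L \<in> carrier_mat n1 n2" using dims by auto
  have Sc: "S \<in> carrier_mat n1 n2" using dims by auto
  have Uc: "Unew \<in> carrier_mat n1 rnew" and Sgc: "Snew \<in> carrier_mat rnew rnew"
    and Vc: "Vnew \<in> carrier_mat n2 rnew" using svd by auto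
  have GG: "transpose_mat G * G = 1\<^sub>m rG" using G unfolding basis_mat_def by auto
  have UU: "transpose_mat Unew * Unew = 1\<^sub>m rnew" using svd unfolding basis_mat_def by auto
  have VV: "transpose_mat Vnew * Vnew = 1\<^sub>m rnew" using svd unfolding basis_mat_def by auto
  have Lnc: "Lnew \<in> carrier_mat n1 n2" unfolding Lnew_def using Gc Lc by auto
  have Lsvd: "Lnew = Unew * Snew * transpose_mat Vnew" unfolding Lnew_def using svd by simp
  have X0c: "X0 \<in> carrier_mat n2 rG" unfolding X0_def using Lc Gc by auto
  have GL: "transpose_mat G * Lnew = 0\<^sub>m rG n2"
  proof -
    have "transpose_mat G * Lnew = (transpose_mat G * (1\<^sub>m n1 - G * transpose_mat G)) * L"
      unfolding Lnew_def by (rule assoc_mult_mat[symmetric]) (use Gc Lc in auto)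
    thus ?thesis using orth_proj_facts(1)[OF Gc GG] Lc by simp
  qed
  have GU: "transpose_mat G * Unew = 0\<^sub>m rG rnew"
  proof -
    define A where "A = transpose_mat G * Unew"
    have Ac: "A \<in> carrier_mat rG rnew" unfolding A_def using Gc Uc by auto
    have "A * Snew * transpose_mat Vnew = transpose_mat G * Lnew"
    proof -
      have "transpose_mat G * Lnew = transpose_mat G * ((Unew * Snew) * transpose_mat Vnew)" using Lsvd by simp
      also have "\<dots> = (transpose_mat G * (Unew * Snew)) * transpose_mat Vnew"
        by (rule assoc_mult_mat[symmetric]) (use Gc Uc Sgc Vc in auto)
      also have "transpose_mat G * (Unew * Snew) = A * Snew"
        unfolding A_def by (rule assoc_mult_mat[symmetric]) (use Gc Uc Sgc in auto)
      finally show ?thesis by simp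
    qed
    hence "A * Snew * transpose_mat Vnew * Vnew = 0\<^sub>m rG rnew" using GL Vc by simp
    moreover have "A * Snew * transpose_mat Vnew * Vnew = A * Snew"
    proof -
      have "A * Snew * transpose_mat Vnew * Vnew = (A * Snew) * (transpose_mat Vnew * Vnew)"
        by (rule assoc_mult_mat) (use Ac Sgc Vc in auto)
      thus ?thesis using VV Ac Sgc by simp
    qed
    ultimately have AS: "A * Snew = 0\<^sub>m rG rnew" by simp
    have "A $$ (a,j) = 0" if "a < rG" "j < rnew" for a j
    proof -
      have "(A * Snew) $$ (a,j) = (\<Sum>l<rnew. A $$ (a,l) * Snew $$ (l,j))"
        using Ac Sgc that by (simp add: row_sprod col_sprod)
      also have "\<dots> = A $$ (a,j) * Snew $$ (j,j)"
      proof -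
        have "(\<Sum>l\<in>{..<rnew}-{j}. A $$ (a,l) * Snew $$ (l,j)) = 0"
          by (rule sum.neutral) (use svd(6) that in auto)
        thus ?thesis by (subst sum.remove[of _ j]) (use that in auto)
      qed
      finally have "A $$ (a,j) * Snew $$ (j,j) = 0" using AS that by simp
      thus ?thesis using svd(7) that by auto
    qed
    thus ?thesis unfolding A_def[symmetric] using Ac by (intro eq_matI) auto
  qed
  define H where "H = hcat G Unew"
  define p where "p = rG + rnew"
  have Hc: "H \<in> carrier_mat n1 p" unfolding H_def p_def using hcat_carrier[OF Gc Uc] .
  have HH: "transpose_mat H * H = 1\<^sub>m p" unfolding H_def p_def by (rule hcat_gram[OF Gc Uc GG UU GU])
  define EG where "EG = selm p rG 0"
  define EU where "EU = selm p rnew rG"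
  have EGc: "EG \<in> carrier_mat p rG" and EUc: "EU \<in> carrier_mat p rnew" unfolding EG_def EU_def by auto
  have GH: "G = H * EG" and UH: "Unew = H * EU"
    unfolding H_def EG_def EU_def p_def using hcat_sel[OF Gc Uc] by auto
  define R where "R = 1\<^sub>m n1 - H * transpose_mat H"
  define Qv where "Qv = 1\<^sub>m n2 - Vnew * transpose_mat Vnew"
  have Rc: "R \<in> carrier_mat n1 n1" unfolding R_def using Hc by auto
  have Qc: "Qv \<in> carrier_mat n2 n2" unfolding Qv_def using Vc by auto
  have PiS': "PiS = {H * transpose_mat Y1 + Y2 * transpose_mat Vnew | Y1 Y2.
                     Y1 \<in> carrier_mat n2 p \<and> Y2 \<in> carrier_mat n1 rnew}"
    unfolding PiS H_def p_def ..
  note pf = proj_formula[OF Hc HH Vc VV PiS', folded R_def Qv_def]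
  note perp = RXQ_perp[OF Hc HH Vc VV, folded R_def Qv_def]
  have RG: "R * G = 0\<^sub>m n1 rG"
  proof -
    have "R * G = (R * H) * EG" unfolding GH by (rule assoc_mult_mat[symmetric]) (use Rc Hc EGc in auto)
    thus ?thesis using orth_proj_facts(2)[OF Hc HH, folded R_def] EGc by simp
  qed
  have Wc: "W \<in> carrier_mat n1 n2" using WFD by auto
  have Wp: "W = R * W * Qv"
  proof -
    have "W - R * W * Qv = 0\<^sub>m n1 n2" using pf(1)[OF Wc] W(1) by simp
    thus ?thesis by (rule mat_diff0) (use Wc Rc Qc in auto)
  qed
  have HW: "transpose_mat H * W = 0\<^sub>m p n2" using perp(1)[OF Wc] Wp by simp
  have WV: "W * Vnew = 0\<^sub>m n1 rnew" using perp(2)[OF Wc] Wp by simp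
  have UW: "transpose_mat Unew * W = 0\<^sub>m rnew n2" unfolding UH by (rule sel_perp[OF Hc EUc Wc HW])
  have GW: "transpose_mat G * W = 0\<^sub>m rG n2" unfolding GH by (rule sel_perp[OF Hc EGc Wc HW])
  have incoh': "frob_norm (P_Omega \<Omega> (X - R * X * Qv)) \<le> 1/4 * frob_norm X" if X: "X \<in> carrier_mat n1 n2" for X
  proof -
    have "frob_norm (P_Omega \<Omega> (proj_onto PiS X)) \<le> 1/4 * frob_norm X"
    proof (rule op_norm_bound[OF incoh _ _ _ X, of 1])
      fix Y :: "real mat" assume Y: "Y \<in> carrier_mat n1 n2"
      show "P_Omega \<Omega> (proj_onto PiS Y) \<in> carrier_mat n1 n2" using pf(1)[OF Y] Y Rc Qc by auto
      have "frob_norm (P_Omega \<Omega> (proj_onto PiS Y)) \<le> frob_norm (proj_onto PiS Y)"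
        by (rule P_Omega_norm[of _ n1 n2]) (use pf(1)[OF Y] Y Rc Qc in auto)
      also have "\<dots> \<le> frob_norm (proj_onto PiS Y + R * Y * Qv)"
      proof (rule pythag[of _ n1 n2])
        show "proj_onto PiS Y \<in> carrier_mat n1 n2" using pf(1)[OF Y] Y Rc Qc by auto
        show "R * Y * Qv \<in> carrier_mat n1 n2" using Y Rc Qc by auto
        show "frob_inner (R * Y * Qv) (proj_onto PiS Y) = 0" using pf(2,3)[OF Y] pf(1)[OF Y] by simp
      qed
      also have "proj_onto PiS Y + R * Y * Qv = Y" using pf(1)[OF Y] Y Rc Qc by (intro eq_matI) auto
      finally show "frob_norm (P_Omega \<Omega> (proj_onto PiS Y)) \<le> 1 * frob_norm Y" by simp
    next
      fix Y :: "real mat" and a :: real assume Y: "Y \<in> carrier_mat n1 n2"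
      have aY: "a \<cdot>\<^sub>m Y \<in> carrier_mat n1 n2" using Y by simp
      have "R * (a \<cdot>\<^sub>m Y) * Qv = a \<cdot>\<^sub>m (R * Y * Qv)"
        using Rc Y Qc by (simp add: mult_smult_distrib[of _ n1 n1 _ n2] mult_smult_assoc_mat[of _ n1 n2 _ n2])
      hence "proj_onto PiS (a \<cdot>\<^sub>m Y) = a \<cdot>\<^sub>m proj_onto PiS Y"
        using pf(1)[OF aY] pf(1)[OF Y] Y Rc Qc by (simp) (intro eq_matI, auto simp: algebra_simps)
      moreover have PYc: "proj_onto PiS Y \<in> carrier_mat n1 n2" using pf(1)[OF Y] Y Rc Qc by auto
      ultimately show "P_Omega \<Omega> (proj_onto PiS (a \<cdot>\<^sub>m Y)) = a \<cdot>\<^sub>m P_Omega \<Omega> (proj_onto PiS Y)"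
        using P_Omega_smult[OF PYc] by metis
    qed
    thus ?thesis using pf(1)[OF X] by simp
  qed
  have Wb: "\<forall>v\<in>carrier_vec n2. vnorm (W *\<^sub>v v) \<le> 9/10 * vnorm v" by (rule spec_bound[OF Wc W(2)])
  define T where "T = (\<Sum>j<rnew. Snew $$ (j,j))"
  have T0: "T \<ge> 0" unfolding T_def using svd(7) by (intro sum_nonneg) (auto intro: less_imp_le)
  have nucL: "nuc_norm Lnew \<le> T" unfolding T_def Lsvd
    by (rule nuc_upper[OF Uc Sgc Vc UU VV svd(6)]) (use svd(7) in \<open>auto simp: less_imp_le\<close>)
  have trL: "frob_inner (Unew * transpose_mat Vnew) Lnew = T"
    unfolding T_def Lsvd by (rule trace_lemma[OF Uc Sgc Vc UU VV])
  have perpL: "frob_inner Z Lnew = 0" if Z: "Z \<in> carrier_mat n1 n2" "Z * Vnew = 0\<^sub>m n1 rnew" for Z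
  proof -
    have "frob_inner Z ((Unew * Snew) * transpose_mat Vnew) = frob_inner (Z * transpose_mat (transpose_mat Vnew)) (Unew * Snew)"
      by (rule frob_inner_mult_right2) (use Z Uc Sgc Vc in auto)
    thus ?thesis using Z Lsvd frob_inner_zero_left by simp
  qed
  have feas0: "Lnew + G * transpose_mat X0 + S = M"
  proof -
    have "transpose_mat X0 = transpose_mat G * L" unfolding X0_def using Lc Gc by (simp add: transpose_mult[of _ n2 n1 _ rG])
    hence "G * transpose_mat X0 = (G * transpose_mat G) * L" using Gc Lc by (simp add: assoc_mult_mat[of _ n1 rG _ n1 _ n2])
    moreover have "Lnew = L - (G * transpose_mat G) * L" unfolding Lnew_def by (rule one_minus_mult[OF Lc]) (use Gc in auto)
    ultimately show ?thesis using M Lc Sc Gc by (intro eq_matI) auto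
  qed
  have Fc: "F \<in> carrier_mat n1 n2" and Dc: "D \<in> carrier_mat n1 n2" using WFD by auto
  have UVc: "Unew * transpose_mat Vnew \<in> carrier_mat n1 n2" using Uc Vc by auto
  have main: "nuc_norm Lnew + lam * l1_norm S \<le> nuc_norm L' + lam * l1_norm S' \<and>
     (nuc_norm L' + lam * l1_norm S' \<le> nuc_norm Lnew + lam * l1_norm S \<longrightarrow> L' = Lnew \<and> S' = S \<and> X' = X0)"
    if L'c: "L' \<in> carrier_mat n1 n2" and S'c: "S' \<in> carrier_mat n1 n2" and X'c: "X' \<in> carrier_mat n2 rG"
      and fe: "L' + G * transpose_mat X' + S' = M" for L' S' X'
  proof -
    define H1 where "H1 = L' - Lnew"
    define D3 where "D3 = X' - X0"
    define E where "E = S - S'"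
    have H1c: "H1 \<in> carrier_mat n1 n2" unfolding H1_def using L'c Lnc by auto
    have D3c: "D3 \<in> carrier_mat n2 rG" unfolding D3_def using X'c X0c by auto
    have Ec: "E \<in> carrier_mat n1 n2" unfolding E_def using Sc S'c by auto
    have GD3c: "G * transpose_mat D3 \<in> carrier_mat n1 n2" using Gc D3c by auto
    have GD3: "G * transpose_mat D3 = G * transpose_mat X' - G * transpose_mat X0"
      unfolding D3_def using Gc X'c X0c by (simp add: transpose_minus mult_minus_distrib_mat[of _ n1 rG])
    have E_eq: "E = H1 + G * transpose_mat D3"
    proof (rule eq_matI)
      fix i j assume "i < dim_row (H1 + G * transpose_mat D3)" "j < dim_col (H1 + G * transpose_mat D3)"
      hence i: "i < n1" and j: "j < n2" using H1c Gc D3c by auto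
      have 1: "L' $$ (i,j) + (G * transpose_mat X') $$ (i,j) + S' $$ (i,j) = M $$ (i,j)"
        using arg_cong[OF fe, of "\<lambda>A. A $$ (i,j)"] i j L'c Gc X'c S'c by simp
      have 2: "Lnew $$ (i,j) + (G * transpose_mat X0) $$ (i,j) + S $$ (i,j) = M $$ (i,j)"
        using arg_cong[OF feas0, of "\<lambda>A. A $$ (i,j)"] i j Lnc Gc X0c Sc by simp
      have c1: "G * transpose_mat X' \<in> carrier_mat n1 n2" "G * transpose_mat X0 \<in> carrier_mat n1 n2"
        using Gc X'c X0c by auto
      have "(L' - Lnew + (G * transpose_mat X' - G * transpose_mat X0)) $$ (i,j)
          = L' $$ (i,j) - Lnew $$ (i,j) + ((G * transpose_mat X') $$ (i,j) - (G * transpose_mat X0) $$ (i,j))"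
        by (rule idx_lin[OF L'c Lnc c1 i j])
      thus "E $$ (i,j) = (H1 + G * transpose_mat D3) $$ (i,j)"
        unfolding GD3 E_def H1_def using i j 1 2 Sc S'c by simp
    qed (use Ec H1c GD3c in auto)
    define K where "K = R * H1 * Qv"
    have Kc: "K \<in> carrier_mat n1 n2" unfolding K_def using Rc H1c Qc by auto
    have HK: "transpose_mat H * K = 0\<^sub>m p n2" unfolding K_def using perp(1)[OF H1c] .
    have KV: "K * Vnew = 0\<^sub>m n1 rnew" unfolding K_def using perp(2)[OF H1c] .
    have UK: "transpose_mat Unew * K = 0\<^sub>m rnew n2" unfolding UH by (rule sel_perp[OF Hc EUc Kc HK])
    have RE: "R * E * Qv = K"
    proof -
      have "R * E = R * H1 + R * (G * transpose_mat D3)" unfolding E_eq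
        by (rule mult_add_distrib_mat) (use Rc H1c GD3c in auto)
      also have "R * (G * transpose_mat D3) = (R * G) * transpose_mat D3"
        by (rule assoc_mult_mat[symmetric]) (use Rc Gc D3c in auto)
      also have "\<dots> = 0\<^sub>m n1 n2" using RG D3c by simp
      finally have "R * E = R * H1" using Rc H1c by simp
      thus ?thesis unfolding K_def by simp
    qed
    define l1c where "l1c = l1_norm (E - P_Omega \<Omega> E)"
    have PEb: "frob_norm (P_Omega \<Omega> E) \<le> l1c / 3 + 4/3 * frob_norm K"
    proof -
      have EKc: "E - K \<in> carrier_mat n1 n2" using Ec Kc by auto
      have a: "frob_norm (P_Omega \<Omega> (E - K)) \<le> 1/4 * frob_norm E" using incoh'[OF Ec] RE by simp
      have "P_Omega \<Omega> E = P_Omega \<Omega> (E - K) + P_Omega \<Omega> K"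
      proof -
        have "E = (E - K) + K" using Ec Kc by (intro eq_matI) auto
        hence "P_Omega \<Omega> E = P_Omega \<Omega> ((E - K) + K)" by simp
        also have "\<dots> = P_Omega \<Omega> (E - K) + P_Omega \<Omega> K" by (rule P_Omega_add[OF EKc Kc])
        finally show ?thesis .
      qed
      hence "frob_norm (P_Omega \<Omega> E) \<le> frob_norm (P_Omega \<Omega> (E - K)) + frob_norm (P_Omega \<Omega> K)"
        using frob_norm_add[of "P_Omega \<Omega> (E - K)" n1 n2 "P_Omega \<Omega> K"] EKc Kc by auto
      also have "\<dots> \<le> 1/4 * frob_norm E + frob_norm K" using a P_Omega_norm[OF Kc, of \<Omega>] by linarith
      finally have b: "frob_norm (P_Omega \<Omega> E) \<le> 1/4 * frob_norm E + frob_norm K" .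
      have "E = P_Omega \<Omega> E + (E - P_Omega \<Omega> E)" using Ec by (intro eq_matI) auto
      hence "frob_norm E \<le> frob_norm (P_Omega \<Omega> E) + frob_norm (E - P_Omega \<Omega> E)"
        using frob_norm_add[of "P_Omega \<Omega> E" n1 n2 "E - P_Omega \<Omega> E"] Ec by (metis P_Omega_carrier minus_carrier_mat)
      also have "frob_norm (E - P_Omega \<Omega> E) \<le> l1c" unfolding l1c_def by (rule frob_le_l1) (use Ec in auto)
      finally have c: "frob_norm E \<le> frob_norm (P_Omega \<Omega> E) + l1c" by simp
      from b c show ?thesis by simp
    qed
    define kap where "kap = (if K = 0\<^sub>m n1 n2 then 0 else 1 / (10 * frob_norm K))"
    have kap0: "kap \<ge> 0" unfolding kap_def using frob_norm_ge0[of K] by simp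
    have kapK: "kap * frob_norm K \<le> 1/10" and kapKK: "kap * frob_inner K K = frob_norm K / 10"
    proof -
      show "kap * frob_norm K \<le> 1/10"
      proof (cases "K = 0\<^sub>m n1 n2")
        case False
        hence "frob_norm K \<noteq> 0" using frob_norm_0[OF Kc] by auto
        thus ?thesis unfolding kap_def using False by simp
      qed (simp add: kap_def)
      show "kap * frob_inner K K = frob_norm K / 10"
      proof (cases "K = 0\<^sub>m n1 n2")
        case False
        hence nz: "frob_norm K \<noteq> 0" using frob_norm_0[OF Kc] by auto
        have "frob_inner K K = (frob_norm K)^2" by (simp add: frob_norm_sq)
        thus ?thesis unfolding kap_def using False nz by (simp add: power2_eq_square)
      next
        case True
        thus ?thesis unfolding kap_def frob_norm_def frob_inner_def by simp
      qed
    qed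
    define Z where "Z = W + kap \<cdot>\<^sub>m K"
    have Zc: "Z \<in> carrier_mat n1 n2" unfolding Z_def using Wc Kc by auto
    have UZ: "transpose_mat Unew * Z = 0\<^sub>m rnew n2"
    proof -
      have "transpose_mat Unew * Z = transpose_mat Unew * W + transpose_mat Unew * (kap \<cdot>\<^sub>m K)"
        unfolding Z_def by (rule mult_add_distrib_mat) (use Uc Wc Kc in auto)
      also have "transpose_mat Unew * (kap \<cdot>\<^sub>m K) = kap \<cdot>\<^sub>m (transpose_mat Unew * K)"
        by (rule mult_smult_distrib) (use Uc Kc in auto)
      finally show ?thesis using UW UK by (intro eq_matI) auto
    qed
    have ZV: "Z * Vnew = 0\<^sub>m n1 rnew"
    proof -
      have "Z * Vnew = W * Vnew + (kap \<cdot>\<^sub>m K) * Vnew"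
        unfolding Z_def by (rule add_mult_distrib_mat) (use Vc Wc Kc in auto)
      also have "(kap \<cdot>\<^sub>m K) * Vnew = kap \<cdot>\<^sub>m (K * Vnew)"
        by (rule mult_smult_assoc_mat) (use Vc Kc in auto)
      finally show ?thesis using WV KV by (intro eq_matI) auto
    qed
    have Zb: "vnorm (Z *\<^sub>v y) \<le> vnorm y" if y: "y \<in> carrier_vec n2" for y
    proof -
      have "Z *\<^sub>v y = W *\<^sub>v y + kap \<cdot>\<^sub>v (K *\<^sub>v y)"
        unfolding Z_def using Wc Kc y by (simp add: add_mult_distrib_mat_vec[of _ n1 n2] smult_mat_vec[of _ n1 n2])
      hence "vnorm (Z *\<^sub>v y) \<le> vnorm (W *\<^sub>v y) + vnorm (kap \<cdot>\<^sub>v (K *\<^sub>v y))"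
        using vnorm_add[of "W *\<^sub>v y" n1 "kap \<cdot>\<^sub>v (K *\<^sub>v y)"] Wc Kc y by auto
      also have "vnorm (kap \<cdot>\<^sub>v (K *\<^sub>v y)) = kap * vnorm (K *\<^sub>v y)"
        using vnorm_smult[of "K *\<^sub>v y" n1 kap] Kc y kap0 by auto
      also have "vnorm (K *\<^sub>v y) \<le> frob_norm K * vnorm y" by (rule vnorm_mult_le[OF Kc y])
      finally have "vnorm (Z *\<^sub>v y) \<le> 9/10 * vnorm y + kap * (frob_norm K * vnorm y)"
        using Wb y kap0 by (smt (verit) mult_left_mono)
      also have "\<dots> \<le> 9/10 * vnorm y + 1/10 * vnorm y"
        using mult_right_mono[OF kapK vnorm_ge0[of y]] by (simp add: mult.assoc)
      finally show ?thesis by simp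
    qed
    define B where "B = Unew * transpose_mat Vnew + Z"
    have Bc: "B \<in> carrier_mat n1 n2" unfolding B_def using UVc Zc by auto
    have Bb: "\<forall>v\<in>carrier_vec n2. vnorm (B *\<^sub>v v) \<le> vnorm v"
    proof
      fix v :: "real vec" assume v: "v \<in> carrier_vec n2"
      define y where "y = v - Vnew *\<^sub>v (transpose_mat Vnew *\<^sub>v v)"
      have yc: "y \<in> carrier_vec n2" unfolding y_def using v Vc by auto
      have 1: "(B *\<^sub>v v) \<bullet> (B *\<^sub>v v) = (transpose_mat Vnew *\<^sub>v v) \<bullet> (transpose_mat Vnew *\<^sub>v v) + (Z *\<^sub>v y) \<bullet> (Z *\<^sub>v y)"
        unfolding B_def using G1[OF Uc Vc Zc UU UZ v] G3[OF Vc Zc ZV v] unfolding y_def by simp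
      have 2: "(transpose_mat Vnew *\<^sub>v v) \<bullet> (transpose_mat Vnew *\<^sub>v v) + y \<bullet> y = v \<bullet> v"
        unfolding y_def by (rule G2[OF Vc VV v])
      have "(Z *\<^sub>v y) \<bullet> (Z *\<^sub>v y) \<le> y \<bullet> y"
        using Zb[OF yc] vnorm_ge0 unfolding vnorm_sq[symmetric] by (simp add: power_mono)
      hence "(vnorm (B *\<^sub>v v))^2 \<le> (vnorm v)^2" using 1 2 unfolding vnorm_sq by simp
      thus "vnorm (B *\<^sub>v v) \<le> vnorm v" using vnorm_ge0 by (meson power2_le_imp_le)
    qed
    have L'eq: "L' = Lnew + H1" unfolding H1_def using L'c Lnc by (intro eq_matI) auto
    have H1eq: "H1 = E - G * transpose_mat D3" using E_eq H1c GD3c by (intro eq_matI) auto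
    have nucB: "frob_inner B L' \<le> nuc_norm L'" by (rule nuc_dual[OF L'c Bc Bb])
    define C where "C = Unew * transpose_mat Vnew + W"
    have Cc: "C \<in> carrier_mat n1 n2" unfolding C_def using UVc Wc by auto
    have kKc: "kap \<cdot>\<^sub>m K \<in> carrier_mat n1 n2" using Kc by auto
    have BC: "B = C + kap \<cdot>\<^sub>m K" unfolding B_def C_def Z_def
      by (rule assoc_add_mat[symmetric]) (use UVc Wc Kc in auto)
    have fBL: "frob_inner B Lnew = T"
    proof -
      have "frob_inner B Lnew = frob_inner (Unew * transpose_mat Vnew) Lnew + frob_inner Z Lnew"
        unfolding B_def by (rule frob_inner_add_left) (use Lnc UVc Zc in auto)
      thus ?thesis using trL perpL[OF Zc ZV] by simp
    qed
    have fKH: "frob_inner K H1 = frob_inner K K"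
    proof -
      have mem: "H1 - K \<in> PiS" using pf(2)[OF H1c] unfolding K_def .
      have "frob_inner K (H1 - K) = 0" using pf(3)[OF H1c] mem unfolding K_def[symmetric] by auto
      moreover have "frob_inner K (H1 - K) = frob_inner K H1 - frob_inner K K"
        by (rule frob_inner_minus_right) (use Kc H1c in auto)
      ultimately show ?thesis by simp
    qed
    have GC: "transpose_mat G * C = 0\<^sub>m rG n2"
    proof -
      have "transpose_mat G * C = transpose_mat G * (Unew * transpose_mat Vnew) + transpose_mat G * W"
        unfolding C_def by (rule mult_add_distrib_mat) (use Gc UVc Wc in auto)
      also have "transpose_mat G * (Unew * transpose_mat Vnew) = (transpose_mat G * Unew) * transpose_mat Vnew"
        by (rule assoc_mult_mat[symmetric]) (use Gc Uc Vc in auto)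
      finally show ?thesis using GU GW Vc by (intro eq_matI) auto
    qed
    have fCG: "frob_inner C (G * transpose_mat D3) = 0"
    proof -
      have "frob_inner C (G * transpose_mat D3) = frob_inner (transpose_mat G * C) (transpose_mat D3)"
        by (rule frob_inner_mult_right) (use Cc Gc D3c in auto)
      thus ?thesis using GC frob_inner_zero_left by simp
    qed
    have fBH: "frob_inner B H1 = frob_inner C E + frob_norm K / 10"
    proof -
      have "frob_inner B H1 = frob_inner C H1 + frob_inner (kap \<cdot>\<^sub>m K) H1"
        unfolding BC by (rule frob_inner_add_left) (use H1c Cc kKc in auto)
      also have "frob_inner (kap \<cdot>\<^sub>m K) H1 = kap * frob_inner K H1"
        by (rule frob_inner_smult_left) (use H1c Kc in auto)
      also have "frob_inner C H1 = frob_inner C E - frob_inner C (G * transpose_mat D3)"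
        unfolding H1eq by (rule frob_inner_minus_right) (use Cc Ec GD3c in auto)
      finally show ?thesis using fCG fKH kapKK by simp
    qed
    have fBL': "frob_inner B L' = T + frob_inner C E + frob_norm K / 10"
    proof -
      have "frob_inner B L' = frob_inner B Lnew + frob_inner B H1"
        unfolding L'eq by (rule frob_inner_add_right) (use Bc Lnc H1c in auto)
      thus ?thesis using fBL fBH by simp
    qed
    define fs where "fs = frob_inner (sgn_mat S) E"
    define fF where "fF = frob_inner F E"
    define fD where "fD = frob_inner (P_Omega \<Omega> D) E"
    have sgc: "sgn_mat S \<in> carrier_mat n1 n2" unfolding sgn_mat_def using Sc by auto
    have PDc: "P_Omega \<Omega> D \<in> carrier_mat n1 n2" using Dc by auto
    have fCE: "frob_inner C E = lam * (fs + fF + fD)"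
    proof -
      have "frob_inner C E = frob_inner (lam \<cdot>\<^sub>m (sgn_mat S + F + P_Omega \<Omega> D)) E" unfolding C_def cert ..
      also have "\<dots> = lam * frob_inner (sgn_mat S + F + P_Omega \<Omega> D) E"
        by (rule frob_inner_smult_left) (use Ec sgc Fc PDc in auto)
      also have "frob_inner (sgn_mat S + F + P_Omega \<Omega> D) E = frob_inner (sgn_mat S + F) E + fD"
        unfolding fD_def by (rule frob_inner_add_left) (use Ec sgc Fc PDc in auto)
      also have "frob_inner (sgn_mat S + F) E = fs + fF"
        unfolding fs_def fF_def by (rule frob_inner_add_left) (use Ec sgc Fc in auto)
      finally show ?thesis .
    qed
    have S'eq: "S' = S - E" unfolding E_def using Sc S'c by (intro eq_matI) auto
    have l1b: "l1_norm S' \<ge> l1_norm S - fs + l1c"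
      unfolding S'eq fs_def l1c_def Omega by (rule l1_subgrad[OF Sc Ec])
    have fFb: "fF \<ge> - (9/10) * l1c"
      unfolding fF_def l1c_def Omega by (rule F_bound[OF Sc Ec Fc]) (use F Omega in auto)
    have fDb: "fD \<ge> - (1/4) * frob_norm (P_Omega \<Omega> E)"
    proof -
      have "fD \<ge> - (frob_norm (P_Omega \<Omega> D) * frob_norm (P_Omega \<Omega> E))" unfolding fD_def by (rule D_bound[OF Dc Ec])
      moreover have "frob_norm (P_Omega \<Omega> D) * frob_norm (P_Omega \<Omega> E) \<le> 1/4 * frob_norm (P_Omega \<Omega> E)"
        by (rule mult_right_mono[OF D frob_norm_ge0])
      ultimately show ?thesis by simp
    qed
    have l1c0: "l1c \<ge> 0" unfolding l1c_def l1_norm_def by (simp add: sum_nonneg)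
    have "fF + fD + l1c \<ge> l1c / 60 - frob_norm K / 3" using fFb fDb PEb by simp
    hence lamb: "lam * (fF + fD + l1c) \<ge> lam * (l1c / 60 - frob_norm K / 3)"
      using lam(1) by (simp add: mult_left_mono)
    have gen: "nuc_norm L' + lam * l1_norm S' \<ge>
        nuc_norm Lnew + lam * l1_norm S + (1/10 - lam/3) * frob_norm K + lam / 60 * l1c"
    proof -
      have "lam * l1_norm S' \<ge> lam * (l1_norm S - fs + l1c)" using l1b lam(1) by (simp add: mult_left_mono)
      hence "nuc_norm L' + lam * l1_norm S' \<ge> T + lam * (fs + fF + fD) + frob_norm K / 10 + lam * (l1_norm S - fs + l1c)"
        using nucB fBL' fCE by simp
      also have "T + lam * (fs + fF + fD) + frob_norm K / 10 + lam * (l1_norm S - fs + l1c)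
          = T + lam * l1_norm S + frob_norm K / 10 + lam * (fF + fD + l1c)" by (simp add: algebra_simps)
      finally show ?thesis using lamb nucL by (simp add: algebra_simps)
    qed
    have coef: "1/10 - lam/3 > 0" using lam by simp
    have K0: "frob_norm K \<ge> 0" by (rule frob_norm_ge0)
    have part1: "nuc_norm Lnew + lam * l1_norm S \<le> nuc_norm L' + lam * l1_norm S'"
    proof -
      have "(1/10 - lam/3) * frob_norm K \<ge> 0" using coef K0 by simp
      moreover have "lam / 60 * l1c \<ge> 0" using lam(1) l1c0 by simp
      ultimately show ?thesis using gen by linarith
    qed
    have part2: "L' = Lnew \<and> S' = S \<and> X' = X0"
      if le: "nuc_norm L' + lam * l1_norm S' \<le> nuc_norm Lnew + lam * l1_norm S"
    proof -
      have sum0: "(1/10 - lam/3) * frob_norm K + lam / 60 * l1c \<le> 0" using gen le by linarith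
      have t1: "(1/10 - lam/3) * frob_norm K \<ge> 0" using coef K0 by simp
      have t2: "lam / 60 * l1c \<ge> 0" using lam(1) l1c0 by simp
      have "(1/10 - lam/3) * frob_norm K = 0" using sum0 t1 t2 by linarith
      hence Kn: "frob_norm K = 0" using coef by simp
      have "lam / 60 * l1c = 0" using sum0 t1 t2 by linarith
      hence l1c0': "l1c = 0" using lam(1) by simp
      have "frob_norm (P_Omega \<Omega> E) = 0" using PEb Kn l1c0' frob_norm_ge0[of "P_Omega \<Omega> E"] by simp
      hence PE0: "P_Omega \<Omega> E = 0\<^sub>m n1 n2" by (rule frob_norm_0[rotated]) (use Ec in auto)
      have EPc: "E - P_Omega \<Omega> E \<in> carrier_mat n1 n2" using Ec by auto
      have "frob_norm (E - P_Omega \<Omega> E) = 0"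
        using frob_le_l1[OF EPc] l1c0' frob_norm_ge0[of "E - P_Omega \<Omega> E"]
        unfolding l1c_def by linarith
      hence "E - P_Omega \<Omega> E = 0\<^sub>m n1 n2" by (rule frob_norm_0[rotated]) (use Ec in auto)
      hence "E = P_Omega \<Omega> E" by (rule mat_diff0) (use Ec in auto)
      hence E0: "E = 0\<^sub>m n1 n2" using PE0 by simp
      have SS: "S' = S" using E0 S'eq Sc by (intro eq_matI) auto
      have H1G: "H1 = - (G * transpose_mat D3)" using H1eq E0 zero_minus_mat'[OF GD3c] by simp
      have D30: "D3 = 0\<^sub>m n2 rG"
      proof (rule ccontr)
        assume nz: "D3 \<noteq> 0\<^sub>m n2 rG"
        define c where "c = frob_norm D3"
        have cpos: "c > 0" unfolding c_def using frob_norm_0[OF D3c] nz frob_norm_ge0[of D3]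
          by (metis less_eq_real_def)
        define N where "N = (1 / c) \<cdot>\<^sub>m transpose_mat D3"
        have Nc: "N \<in> carrier_mat rG n2" unfolding N_def using D3c by auto
        have D3Tc: "transpose_mat D3 \<in> carrier_mat rG n2" using D3c by auto
        have Nn: "frob_norm N = 1" unfolding N_def frob_norm_smult[OF D3Tc] frob_norm_transpose
          using cpos unfolding c_def by simp
        have Nb: "vnorm (N *\<^sub>v y) \<le> vnorm y" if y: "y \<in> carrier_vec n2" for y
          using vnorm_mult_le[OF Nc y] Nn by simp
        define eps where "eps = c / (T + c)"
        have epos: "eps > 0" unfolding eps_def using cpos T0 by simp
        define sq where "sq = sqrt (1 + eps^2)"
        have sqpos: "sq > 0" unfolding sq_def by (simp add: add_pos_nonneg)
        define Z2 where "Z2 = (- eps) \<cdot>\<^sub>m (G * N)"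
        have GNc: "G * N \<in> carrier_mat n1 n2" using Gc Nc by auto
        have Z2c: "Z2 \<in> carrier_mat n1 n2" unfolding Z2_def using GNc by auto
        have UG: "transpose_mat Unew * G = 0\<^sub>m rnew rG"
        proof -
          have "transpose_mat (transpose_mat G * Unew) = transpose_mat Unew * G"
            using Gc Uc by (simp add: transpose_mult[of _ rG n1 _ rnew])
          thus ?thesis using GU by simp
        qed
        have UZ2: "transpose_mat Unew * Z2 = 0\<^sub>m rnew n2"
        proof -
          have "transpose_mat Unew * Z2 = (- eps) \<cdot>\<^sub>m (transpose_mat Unew * (G * N))"
            unfolding Z2_def by (rule mult_smult_distrib) (use Uc GNc in auto)
          also have "transpose_mat Unew * (G * N) = (transpose_mat Unew * G) * N"
            by (rule assoc_mult_mat[symmetric]) (use Uc Gc Nc in auto)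
          finally show ?thesis using UG Nc by (intro eq_matI) auto
        qed
        define B2' where "B2' = Unew * transpose_mat Vnew + Z2"
        have B2'c: "B2' \<in> carrier_mat n1 n2" unfolding B2'_def using UVc Z2c by auto
        define B2 where "B2 = (1 / sq) \<cdot>\<^sub>m B2'"
        have B2c: "B2 \<in> carrier_mat n1 n2" unfolding B2_def using B2'c by auto
        have B2b: "\<forall>v\<in>carrier_vec n2. vnorm (B2 *\<^sub>v v) \<le> vnorm v"
        proof
          fix v :: "real vec" assume v: "v \<in> carrier_vec n2"
          have Nv: "N *\<^sub>v v \<in> carrier_vec rG" using Nc v by auto
          have 1: "(B2' *\<^sub>v v) \<bullet> (B2' *\<^sub>v v) = (transpose_mat Vnew *\<^sub>v v) \<bullet> (transpose_mat Vnew *\<^sub>v v) + (Z2 *\<^sub>v v) \<bullet> (Z2 *\<^sub>v v)"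
            unfolding B2'_def by (rule G1[OF Uc Vc Z2c UU UZ2 v])
          have 2: "(transpose_mat Vnew *\<^sub>v v) \<bullet> (transpose_mat Vnew *\<^sub>v v) \<le> v \<bullet> v"
            using G2[OF Vc VV v] sprod_self_ge0[of "v - Vnew *\<^sub>v (transpose_mat Vnew *\<^sub>v v)"] by linarith
          have Z2v: "Z2 *\<^sub>v v = (- eps) \<cdot>\<^sub>v (G *\<^sub>v (N *\<^sub>v v))"
            unfolding Z2_def using Gc Nc v by (simp add: smult_mat_vec[of _ n1 n2] assoc_mult_mat_vec[of _ n1 rG _ n2])
          have "(Z2 *\<^sub>v v) \<bullet> (Z2 *\<^sub>v v) = eps^2 * ((G *\<^sub>v (N *\<^sub>v v)) \<bullet> (G *\<^sub>v (N *\<^sub>v v)))"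
            unfolding Z2v using Gc Nv
            by (simp add: smult_scalar_prod_distrib[of _ n1] scalar_prod_smult_distrib[of _ n1] power2_eq_square)
          also have "(G *\<^sub>v (N *\<^sub>v v)) \<bullet> (G *\<^sub>v (N *\<^sub>v v)) = (N *\<^sub>v v) \<bullet> (N *\<^sub>v v)"
            by (rule isom_sprod[OF Gc GG Nv])
          also have "(N *\<^sub>v v) \<bullet> (N *\<^sub>v v) \<le> v \<bullet> v"
            using Nb[OF v] vnorm_ge0[of "N *\<^sub>v v"] unfolding vnorm_sq[symmetric] by (simp add: power_mono)
          finally have 3: "(Z2 *\<^sub>v v) \<bullet> (Z2 *\<^sub>v v) \<le> eps^2 * (v \<bullet> v)"
            by (simp add: mult_left_mono)
          have "(vnorm (B2' *\<^sub>v v))^2 \<le> (sq * vnorm v)^2"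
            unfolding vnorm_sq power_mult_distrib sq_def using 1 2 3 by (simp add: algebra_simps)
          hence B2'v: "vnorm (B2' *\<^sub>v v) \<le> sq * vnorm v"
            using vnorm_ge0 sqpos by (meson less_imp_le mult_nonneg_nonneg power2_le_imp_le)
          have "B2 *\<^sub>v v = (1 / sq) \<cdot>\<^sub>v (B2' *\<^sub>v v)" unfolding B2_def by (rule smult_mat_vec[OF B2'c v])
          hence "vnorm (B2 *\<^sub>v v) = (1 / sq) * vnorm (B2' *\<^sub>v v)"
            using vnorm_smult[of "B2' *\<^sub>v v" n1 "1/sq"] B2'c v sqpos by auto
          also have "\<dots> \<le> vnorm v" using B2'v sqpos by (simp add: divide_le_eq mult.commute)
          finally show "vnorm (B2 *\<^sub>v v) \<le> vnorm v" .
        qed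
        have nucB2: "frob_inner B2 L' \<le> nuc_norm L'" by (rule nuc_dual[OF L'c B2c B2b])
        have fB2'L: "frob_inner B2' Lnew = T"
        proof -
          have "frob_inner B2' Lnew = frob_inner (Unew * transpose_mat Vnew) Lnew + frob_inner Z2 Lnew"
            unfolding B2'_def by (rule frob_inner_add_left) (use Lnc UVc Z2c in auto)
          also have "frob_inner Z2 Lnew = (- eps) * frob_inner (G * N) Lnew"
            unfolding Z2_def by (rule frob_inner_smult_left) (use Lnc GNc in auto)
          also have "frob_inner (G * N) Lnew = frob_inner Lnew (G * N)"
            by (rule frob_inner_comm) (use GNc Lnc in auto)
          also have "\<dots> = frob_inner (transpose_mat G * Lnew) N"
            by (rule frob_inner_mult_right) (use Lnc Gc Nc in auto)
          also have "\<dots> = 0" using GL frob_inner_zero_left by simp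
          finally show ?thesis using trL by simp
        qed
        have GB2': "transpose_mat G * B2' = (- eps) \<cdot>\<^sub>m N"
        proof -
          have "transpose_mat G * B2' = transpose_mat G * (Unew * transpose_mat Vnew) + transpose_mat G * Z2"
            unfolding B2'_def by (rule mult_add_distrib_mat) (use Gc UVc Z2c in auto)
          also have "transpose_mat G * (Unew * transpose_mat Vnew) = (transpose_mat G * Unew) * transpose_mat Vnew"
            by (rule assoc_mult_mat[symmetric]) (use Gc Uc Vc in auto)
          also have "transpose_mat G * Z2 = (- eps) \<cdot>\<^sub>m (transpose_mat G * (G * N))"
            unfolding Z2_def by (rule mult_smult_distrib) (use Gc GNc in auto)
          also have "transpose_mat G * (G * N) = (transpose_mat G * G) * N"
            by (rule assoc_mult_mat[symmetric]) (use Gc Nc in auto)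
          finally show ?thesis using GU GG Nc Vc by (intro eq_matI) auto
        qed
        have fND: "frob_inner N (transpose_mat D3) = c"
        proof -
          have "frob_inner N (transpose_mat D3) = (1/c) * frob_inner (transpose_mat D3) (transpose_mat D3)"
            unfolding N_def by (rule frob_inner_smult_left) (use D3Tc in auto)
          also have "frob_inner (transpose_mat D3) (transpose_mat D3) = c^2"
            unfolding c_def using frob_norm_sq[of "transpose_mat D3"] frob_norm_transpose[of D3] by simp
          finally show ?thesis using cpos by (simp add: power2_eq_square)
        qed
        have fB2'H: "frob_inner B2' H1 = eps * c"
        proof -
          have "frob_inner B2' H1 = - frob_inner B2' (G * transpose_mat D3)"
            unfolding H1G by (rule frob_inner_uminus_right[OF B2'c GD3c])
          also have "frob_inner B2' (G * transpose_mat D3) = frob_inner (transpose_mat G * B2') (transpose_mat D3)"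
            by (rule frob_inner_mult_right) (use B2'c Gc D3c in auto)
          also have "\<dots> = (- eps) * frob_inner N (transpose_mat D3)"
            unfolding GB2' by (rule frob_inner_smult_left) (use D3Tc Nc in auto)
          finally show ?thesis using fND by simp
        qed
        have fB2: "frob_inner B2 L' = (T + eps * c) / sq"
        proof -
          have "frob_inner B2 L' = (1 / sq) * frob_inner B2' L'"
            unfolding B2_def by (rule frob_inner_smult_left) (use L'c B2'c in auto)
          also have "frob_inner B2' L' = frob_inner B2' Lnew + frob_inner B2' H1"
            unfolding L'eq by (rule frob_inner_add_right) (use B2'c Lnc H1c in auto)
          finally show ?thesis using fB2'L fB2'H by simp
        qed
        have ineq: "T < (T + eps * c) / sq"
        proof -
          have eT: "eps * T \<le> c" unfolding eps_def using cpos T0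
            by (simp add: divide_le_eq mult.commute)
          have eT0: "eps * T \<ge> 0" using epos T0 by simp
          have "(T * sq)^2 = T^2 + (eps * T) * (eps * T)" unfolding sq_def
            by (simp add: power_mult_distrib algebra_simps power2_eq_square)
          also have "(eps * T) * (eps * T) \<le> (eps * T) * c" using eT eT0 by (simp add: mult_left_mono)
          also have "T^2 + (eps * T) * c < (T + eps * c)^2"
          proof -
            have "0 \<le> T * (c * eps)" using epos cpos T0 by simp
            moreover have "0 < c * (c * (eps * eps))" using epos cpos by simp
            ultimately show ?thesis by (simp add: power2_eq_square algebra_simps)
          qed
          finally have "(T * sq)^2 < (T + eps * c)^2" by simp
          hence "T * sq < T + eps * c" using epos cpos T0
            by (meson add_nonneg_nonneg less_imp_le mult_nonneg_nonneg power_less_imp_less_base)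
          thus ?thesis using sqpos by (simp add: less_divide_eq)
        qed
        have "nuc_norm L' \<le> nuc_norm Lnew" using le SS by simp
        thus False using nucB2 fB2 ineq nucL by linarith
      qed
      have "X' - X0 = 0\<^sub>m n2 rG" using D30 unfolding D3_def .
      hence "X' = X0" by (rule mat_diff0[OF _ X'c X0c])
      moreover have "L' = Lnew"
      proof -
        have "G * transpose_mat D3 = 0\<^sub>m n1 n2" using D30 Gc by simp
        moreover have "- 0\<^sub>m n1 n2 = (0\<^sub>m n1 n2 :: real mat)" by (intro eq_matI) auto
        ultimately have "H1 = 0\<^sub>m n1 n2" using H1G by simp
        thus ?thesis using L'eq Lnc by simp
      qed
      ultimately show ?thesis using SS by simp
    qed
    show ?thesis using part1 part2 by blast
  qed
  show ?thesis
    unfolding Let_def Lnew_def[symmetric] X0_def[symmetric]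
    apply (simp only: split_beta fst_conv snd_conv)
  proof (intro conjI allI impI)
    show "Lnew \<in> carrier_mat n1 n2" by (rule Lnc)
    show "S \<in> carrier_mat n1 n2" by (rule Sc)
    show "X0 \<in> carrier_mat n2 rG" by (rule X0c)
    show "Lnew + G * transpose_mat X0 + S = M" by (rule feas0)
  next
    fix L' S' X' :: "real mat"
    assume f: "L' \<in> carrier_mat n1 n2 \<and> S' \<in> carrier_mat n1 n2 \<and> X' \<in> carrier_mat n2 rG \<and>
      L' + G * transpose_mat X' + S' = M"
    hence f': "L' \<in> carrier_mat n1 n2" "S' \<in> carrier_mat n1 n2" "X' \<in> carrier_mat n2 rG"
      "L' + G * transpose_mat X' + S' = M" by blast+
    note mm = main[OF f']
    show "nuc_norm Lnew + lam * l1_norm S \<le> nuc_norm L' + lam * l1_norm S'" using mm by blast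
    assume "nuc_norm L' + lam * l1_norm S' \<le> nuc_norm Lnew + lam * l1_norm S"
    thus "(L', S', X') = (Lnew, S, X0)" using mm by blast
  qed
qed

end
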